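(* Let $\mathcal S$ be a Hilbert space, $B$ a bounded normal operator on $\mathcal S$, and $g\in\mathscr T'$. Then the map $e^{B^*\otimes a(g)}$ is injective on $\mathcal S\hat\otimes\mathcal F_{\rm fin}(\mathscr T)$. Consequently $\langle\Psi,\Phi\rangle_{B,g}:=\langle e^{B^*\otimes a(g)}\Psi,e^{B^*\otimes a(g)}\Phi\rangle_{\mathcal S\otimes\mathcal F(\mathfrak h)}$ is a non-degenerate inner product on $\mathcal S\hat\otimes\mathcal F_{\rm fin}(\mathscr T)$.
   Context: Let $\mathfrak h$ be a complex Hilbert space, $\mathscr T$ a topological vector space continuously embedded in $\mathfrak h$ with dense image, $\mathscr T'$ the space of continuous antilinear functionals on $\mathscr T$; $\langle\varphi,f\rangle:=\overline{\varphi(f)}$ for $\varphi\in\mathscr T'$, $f\in\mathscr T$. $\mathcal F(\mathfrak h)$ is the symmetric Fock space, $\mathcal F_{\rm fin}(\mathscr T)$ the vectors with finitely many nonzero components, the $n$-th in the algebraic symmetric tensor product of $n$ copies of $\mathscr T$. For $g\in\mathscr T'$, $a(g)$ on $\mathcal F_{\rm fin}(\mathscr T)$ is defined linearly by $(a(g)\Psi)_n=\frac{\sqrt{n+1}}{(n+1)!}\sum_{\sigma\in S_{n+1}}\langle g,\psi_{\sigma(1)}\rangle\psi_{\sigma(2)}\otimes\cdots\otimes\psi_{\sigma(n+1)}$ for $\Psi_{n+1}=\psi_1\otimes_s\cdots\otimes_s\psi_{n+1}$. $\hat\otimes$ denotes the algebraic tensor product. $e^{B^*\otimes a(g)}$ is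 defined on $\mathcal S\hat\otimes\mathcal F_{\rm fin}(\mathscr T)$ by linear extension of $e^{B^*\otimes a(g)}(\varphi\otimes\Xi)=\sum_{k\ge0}\frac1{k!}((B^* )^k\varphi)\otimes(a(g)^k\Xi)$ (a finite sum). *)

theory Defs
  imports "HOL-Analysis.Analysis"
begin

text \<open>The inner product is
  antilinear in the first and linear in the second argument.\<close>

class complex_vector = real_vector +
  fixes scaleC :: "complex \<Rightarrow> 'a \<Rightarrow> 'a"  (infixr \<open>*\<^sub>C\<close> 75)
  assumes scaleC_add_right: "a *\<^sub>C (x + y) = a *\<^sub>C x + a *\<^sub>C y"
    and scaleC_add_left: "(a + b) *\<^sub>C x = a *\<^sub>C x + b *\<^sub>C x"
    and scaleC_scaleC: "a *\<^sub>C (b *\<^sub>C x) = (a * b) *\<^sub>C x"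
    and scaleC_one: "1 *\<^sub>C x = x"
    and scaleR_scaleC: "r *\<^sub>R x = complex_of_real r *\<^sub>C x"

class complex_inner = complex_vector + real_normed_vector +
  fixes cinner :: "'a \<Rightarrow> 'a \<Rightarrow> complex"
  assumes cinner_commute: "cinner x y = cnj (cinner y x)"
    and cinner_add_right: "cinner x (y + z) = cinner x y + cinner x z"
    and cinner_scaleC_right: "cinner x (c *\<^sub>C y) = c * cinner x y"
    and cinner_self_real: "Im (cinner x x) = 0"
    and cinner_self_nonneg: "0 \<le> Re (cinner x x)"
    and cinner_self_eq_0: "cinner x x = 0 \<longleftrightarrow> x = 0"
    and norm_eq_sqrt_cinner: "norm x = sqrt (Re (cinner x x))"

class chilbert_space = complex_inner + complete_space

definition clinear :: "('a::complex_vector \<Rightarrow> 'b::complex_vector) \<Rightarrow> bool" where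
  "clinear f \<longleftrightarrow> (\<forall>x y. f (x + y) = f x + f y) \<and> (\<forall>c x. f (c *\<^sub>C x) = c *\<^sub>C f x)"

definition bounded_clinear_op :: "('a::complex_inner \<Rightarrow> 'b::complex_inner) \<Rightarrow> bool" where
  "bounded_clinear_op f \<longleftrightarrow> clinear f \<and> (\<exists>K. \<forall>x. norm (f x) \<le> norm x * K)"

text \<open>\<open>Bs\<close> is the adjoint of \<open>B\<close> (the adjoint is unique, so this pins \<open>Bs = B\<^sup>*\<close>).\<close>
definition is_adjoint :: "('a::complex_inner \<Rightarrow> 'a) \<Rightarrow> ('a \<Rightarrow> 'a) \<Rightarrow> bool" where
  "is_adjoint B Bs \<longleftrightarrow> (\<forall>x y. cinner (Bs x) y = cinner x (B y))"

definition normal_op :: "('a::complex_inner \<Rightarrow> 'a) \<Rightarrow> ('a \<Rightarrow> 'a) \<Rightarrow> bool" where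
  "normal_op B Bs \<longleftrightarrow> (\<forall>x. Bs (B x) = B (Bs x))"

text \<open>The topological vector space \<open>\<T>\<close> continuously and densely embedded in \<open>\<h>\<close>
  is modelled by its image: a complex linear subspace \<open>D\<close> of \<open>\<h>\<close>, carrying its own
  topology \<open>\<tau>\<close> (with \<open>topspace \<tau> = D\<close>) making it a topological vector space, such
  that the inclusion \<open>D \<hookrightarrow> \<h>\<close> is continuous and \<open>D\<close> is dense.\<close>

definition csubspace :: "'a::complex_vector set \<Rightarrow> bool" where
  "csubspace D \<longleftrightarrow> 0 \<in> D \<and> (\<forall>x\<in>D. \<forall>y\<in>D. x + y \<in> D) \<and> (\<forall>c. \<forall>x\<in>D. c *\<^sub>C x \<in> D)"

definition test_space :: "'h::chilbert_space set \<Rightarrow> 'h topology \<Rightarrow> bool" where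
  "test_space D \<tau> \<longleftrightarrow>
     csubspace D \<and> topspace \<tau> = D
   \<and> continuous_map (prod_topology \<tau> \<tau>) \<tau> (\<lambda>(x, y). x + y)
   \<and> continuous_map (prod_topology (euclidean :: complex topology) \<tau>) \<tau> (\<lambda>(c, x). c *\<^sub>C x)
   \<and> continuous_map \<tau> euclidean (\<lambda>x. x)
   \<and> closure D = UNIV"

text \<open>Continuous antilinear functionals on \<open>\<T>\<close> (values outside \<open>D\<close> are irrelevant).\<close>
definition antidual :: "'h::chilbert_space set \<Rightarrow> 'h topology \<Rightarrow> ('h \<Rightarrow> complex) set" where
  "antidual D \<tau> = {g. (\<forall>x\<in>D. \<forall>y\<in>D. g (x + y) = g x + g y)
                     \<and> (\<forall>c. \<forall>x\<in>D. g (c *\<^sub>C x) = cnj c * g x)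
                     \<and> continuous_map \<tau> euclidean g}"

definition pairing :: "('h \<Rightarrow> complex) \<Rightarrow> 'h \<Rightarrow> complex" where
  "pairing \<phi> f = cnj (\<phi> f)"

text \<open>An element of \<open>\<S> \<otimes>alg \<F>_fin(\<T>)\<close> is represented by its partial contraction
  against \<open>\<T>'\<close>: a map \<open>\<Psi>\<close> sending a list \<open>[g\<^sub>1,\<dots>,g\<^sub>n]\<close> of elements of \<open>\<T>'\<close> to
  the vector of \<open>\<S>\<close> obtained by pairing the \<open>n\<close>-particle component with
  \<open>g\<^sub>1 \<otimes> \<dots> \<otimes> g\<^sub>n\<close> (and to 0 if some entry is not in \<open>\<T>'\<close>).  Since \<open>\<T>'\<close>
  separates the points of \<open>\<T>\<close>, this identifies the algebraic tensor product with a
  space of functions.\<close>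

type_synonym ('h, 's) ftensor = "('h \<Rightarrow> complex) list \<Rightarrow> 's"

definition sym_elem ::
  "'h::chilbert_space set \<Rightarrow> 'h topology \<Rightarrow> 's::chilbert_space \<Rightarrow> 'h list \<Rightarrow> ('h, 's) ftensor" where
  "sym_elem D \<tau> \<phi> \<psi>s = (\<lambda>gs.
     if length gs = length \<psi>s \<and> set gs \<subseteq> antidual D \<tau> then
       (complex_of_real (1 / fact (length \<psi>s)) *
          (\<Sum>\<sigma>\<in>{\<sigma>. \<sigma> permutes {..<length \<psi>s}}.
             \<Prod>k<length \<psi>s. pairing (gs ! k) (\<psi>s ! \<sigma> k))) *\<^sub>C \<phi>
     else 0)"

definition rep_of :: "'h::chilbert_space set \<Rightarrow> 'h topology \<Rightarrow> ('h, 's::chilbert_space) ftensor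
     \<Rightarrow> nat \<Rightarrow> (nat \<Rightarrow> 's) \<Rightarrow> (nat \<Rightarrow> 'h list) \<Rightarrow> bool" where
  "rep_of D \<tau> \<Psi> m \<phi> \<psi>s \<longleftrightarrow> (\<forall>i<m. set (\<psi>s i) \<subseteq> D)
                     \<and> \<Psi> = (\<lambda>gs. \<Sum>i<m. sym_elem D \<tau> (\<phi> i) (\<psi>s i) gs)"

definition SFfin :: "'h::chilbert_space set \<Rightarrow> 'h topology \<Rightarrow> ('h, 's::chilbert_space) ftensor set" where
  "SFfin D \<tau> = {\<Psi>. \<exists>m \<phi> \<psi>s. rep_of D \<tau> \<Psi> m \<phi> \<psi>s}"

text \<open>Annihilation operator: \<open>(a(g)\<Psi>)(gs) = sqrt(n+1) \<Psi>(g # gs)\<close>, \<open>n = length gs\<close>;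
  on elementary tensors this is exactly the formula of the paper.\<close>
definition ann :: "('h \<Rightarrow> complex) \<Rightarrow> ('h, 's::chilbert_space) ftensor \<Rightarrow> ('h, 's) ftensor" where
  "ann g \<Psi> = (\<lambda>gs. complex_of_real (sqrt (real (length gs + 1))) *\<^sub>C \<Psi> (g # gs))"

text \<open>\<open>e^{B\<^sup>* \<otimes> a(g)}\<close>: \<open>\<Sum>\<^sub>k (1/k!) (B\<^sup>*)\<^sup>k \<otimes> a(g)\<^sup>k\<close> (a finite sum on \<open>SFfin\<close>).\<close>
definition exp_op :: "('s::chilbert_space \<Rightarrow> 's) \<Rightarrow> ('h \<Rightarrow> complex) \<Rightarrow> ('h, 's) ftensor \<Rightarrow> ('h, 's) ftensor" where
  "exp_op Bs g \<Psi> = (\<lambda>gs. \<Sum>k. complex_of_real (1 / fact k) *\<^sub>C (Bs ^^ k) (((ann g) ^^ k) \<Psi> gs))"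

text \<open>The inner product of \<open>\<S> \<otimes> \<F>(\<h>)\<close> restricted to \<open>SFfin\<close>, computed from any
  pair of representations as finite sums of elementary tensors:
  \<open>\<langle>\<phi>\<otimes>\<psi>\<^sub>1\<otimes>\<^sub>s\<dots>\<otimes>\<^sub>s\<psi>\<^sub>n, \<phi>'\<otimes>\<psi>'\<^sub>1\<otimes>\<^sub>s\<dots>\<otimes>\<^sub>s\<psi>'\<^sub>n\<rangle> = \<langle>\<phi>,\<phi>'\<rangle> (1/n!) \<Sum>\<^sub>\<sigma> \<Prod>\<^sub>k \<langle>\<psi>\<^sub>k,\<psi>'\<^sub>\<sigma>\<^sub>k\<rangle>\<close>,
  different particle numbers being orthogonal.\<close>
definition elem_inner :: "'s::chilbert_space \<Rightarrow> 'h::chilbert_space list \<Rightarrow> 's \<Rightarrow> 'h list \<Rightarrow> complex" where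
  "elem_inner \<phi> \<psi>s \<phi>' \<psi>s' =
     (if length \<psi>s = length \<psi>s' then
        cinner \<phi> \<phi>' * complex_of_real (1 / fact (length \<psi>s)) *
          (\<Sum>\<sigma>\<in>{\<sigma>. \<sigma> permutes {..<length \<psi>s}}. \<Prod>k<length \<psi>s. cinner (\<psi>s ! k) (\<psi>s' ! \<sigma> k))
      else 0)"

definition tinner :: "'h::chilbert_space set \<Rightarrow> 'h topology \<Rightarrow> ('h, 's::chilbert_space) ftensor
     \<Rightarrow> ('h, 's) ftensor \<Rightarrow> complex" where
  "tinner D \<tau> \<Psi> \<Phi> = (THE z. \<forall>m \<phi> \<psi>s m' \<phi>' \<psi>s'.
       rep_of D \<tau> \<Psi> m \<phi> \<psi>s \<longrightarrow> rep_of D \<tau> \<Phi> m' \<phi>' \<psi>s' \<longrightarrow>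
       z = (\<Sum>i<m. \<Sum>j<m'. elem_inner (\<phi> i) (\<psi>s i) (\<phi>' j) (\<psi>s' j)))"

text \<open>A non-degenerate (i.e. positive definite) inner product on a set \<open>V\<close> of
  \<open>ftensor\<close>s (vector operations pointwise): hermitian, linear in the second
  argument, positive definite.\<close>
definition nondeg_inner_on :: "('h, 's::chilbert_space) ftensor set
     \<Rightarrow> (('h, 's) ftensor \<Rightarrow> ('h, 's) ftensor \<Rightarrow> complex) \<Rightarrow> bool" where
  "nondeg_inner_on V p \<longleftrightarrow>
     (\<forall>\<Psi>\<in>V. \<forall>\<Phi>\<in>V. p \<Psi> \<Phi> = cnj (p \<Phi> \<Psi>))
   \<and> (\<forall>\<Psi>\<in>V. \<forall>\<Phi>\<in>V. \<forall>\<Xi>\<in>V. p \<Psi> (\<lambda>gs. \<Phi> gs + \<Xi> gs) = p \<Psi> \<Phi> + p \<Psi> \<Xi>)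
   \<and> (\<forall>\<Psi>\<in>V. \<forall>\<Phi>\<in>V. \<forall>c. p \<Psi> (\<lambda>gs. c *\<^sub>C \<Phi> gs) = c * p \<Psi> \<Phi>)
   \<and> (\<forall>\<Psi>\<in>V. Im (p \<Psi> \<Psi>) = 0 \<and> 0 \<le> Re (p \<Psi> \<Psi>))
   \<and> (\<forall>\<Psi>\<in>V. p \<Psi> \<Psi> = 0 \<longrightarrow> \<Psi> = (\<lambda>gs. 0))"

end

theory Submission
  imports Defs
begin


lemma scaleC_zero_right[simp]: "a *\<^sub>C (0::'a::complex_vector) = 0"
  using scaleC_add_right[of a "0::'a" 0] by simp

lemma scaleC_zero_left[simp]: "(0::complex) *\<^sub>C (x::'a::complex_vector) = 0"
  using scaleC_add_left[of 0 0 x] by simp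

lemma scaleC_minus_one: "(-1::complex) *\<^sub>C (x::'a::complex_vector) = - x"
  using scaleR_scaleC[of "-1" x] by simp

lemma scaleC_sum_left: "(\<Sum>i\<in>A. c i) *\<^sub>C (x::'a::complex_vector) = (\<Sum>i\<in>A. c i *\<^sub>C x)"
  by (induct A rule: infinite_finite_induct) (auto simp: scaleC_add_left)

lemma scaleC_sum_right: "a *\<^sub>C (\<Sum>i\<in>A. f i) = (\<Sum>i\<in>A. a *\<^sub>C (f i::'a::complex_vector))"
  by (induct A rule: infinite_finite_induct) (auto simp: scaleC_add_right)

lemma scaleC_minus_right: "a *\<^sub>C (- x) = - (a *\<^sub>C (x::'a::complex_vector))"
proof -
  have "a *\<^sub>C (- x) = a *\<^sub>C ((-1) *\<^sub>C x)" by (simp add: scaleC_minus_one)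
  also have "\<dots> = (a * -1) *\<^sub>C x" by (rule scaleC_scaleC)
  also have "\<dots> = (-1) *\<^sub>C (a *\<^sub>C x)" by (simp add: scaleC_scaleC)
  also have "\<dots> = - (a *\<^sub>C x)" by (rule scaleC_minus_one)
  finally show ?thesis .
qed

lemma scaleC_diff_right: "a *\<^sub>C (x - y) = a *\<^sub>C x - a *\<^sub>C (y::'a::complex_vector)"
  unfolding diff_conv_add_uminus scaleC_add_right scaleC_minus_right ..

lemma scaleC_comm: "a *\<^sub>C (b *\<^sub>C (x::'a::complex_vector)) = b *\<^sub>C (a *\<^sub>C x)"
  by (simp add: scaleC_scaleC mult.commute)

lemma cinner_zero_right[simp]: "cinner x (0::'a::complex_inner) = 0"
  using cinner_add_right[of x "0::'a" 0] by simp

lemma cinner_zero_left[simp]: "cinner (0::'a::complex_inner) x = 0"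
  using cinner_commute[of 0 x] by simp

lemma cinner_add_left: "cinner (x + y) (z::'a::complex_inner) = cinner x z + cinner y z"
  by (metis cinner_commute cinner_add_right complex_cnj_add)

lemma cinner_scaleC_left: "cinner (c *\<^sub>C x) (y::'a::complex_inner) = cnj c * cinner x y"
  by (metis cinner_commute cinner_scaleC_right complex_cnj_mult)

lemma cinner_minus_right: "cinner x (- y) = - cinner x (y::'a::complex_inner)"
proof -
  have "cinner x y + cinner x (-y) = 0" using cinner_add_right[of x y "-y"] by simp
  then show ?thesis by (simp add: eq_neg_iff_add_eq_0 add.commute)
qed

lemma cinner_minus_left: "cinner (- x) y = - cinner x (y::'a::complex_inner)"
  by (metis cinner_commute cinner_minus_right complex_cnj_minus)

lemma cinner_diff_right: "cinner x (y - z) = cinner x y - cinner x (z::'a::complex_inner)"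
  unfolding diff_conv_add_uminus cinner_add_right cinner_minus_right ..

lemma cinner_diff_left: "cinner (x - y) z = cinner x z - cinner y (z::'a::complex_inner)"
  unfolding diff_conv_add_uminus cinner_add_left cinner_minus_left ..

lemma cinner_sum_left: "cinner (\<Sum>i\<in>A. f i) (y::'a::complex_inner) = (\<Sum>i\<in>A. cinner (f i) y)"
  by (induct A rule: infinite_finite_induct) (auto simp: cinner_add_left)

lemma cinner_sum_right: "cinner y (\<Sum>i\<in>A. f i) = (\<Sum>i\<in>A. cinner y (f i::'a::complex_inner))"
  by (induct A rule: infinite_finite_induct) (auto simp: cinner_add_right)

lemma cinner_self_eq_norm: "cinner x x = complex_of_real ((norm (x::'a::complex_inner))^2)"
  using cinner_self_real[of x] cinner_self_nonneg[of x] norm_eq_sqrt_cinner[of x]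
  by (simp add: complex_eq_iff)

lemma norm_add_sq: "(norm (x + y))^2 = (norm x)^2 + (norm y)^2 + 2 * Re (cinner x (y::'a::complex_inner))"
proof -
  have "cinner (x+y) (x+y) = cinner x x + cinner y y + cinner x y + cinner y x"
    by (simp add: cinner_add_left cinner_add_right)
  moreover have "Re (cinner y x) = Re (cinner x y)" by (subst cinner_commute) simp
  moreover have "(norm (x+y))^2 = Re (cinner (x+y) (x+y))" "(norm x)^2 = Re (cinner x x)" "(norm y)^2 = Re (cinner y y)"
    by (simp_all add: cinner_self_eq_norm)
  ultimately show ?thesis by simp
qed

lemma norm_diff_sq: "(norm (x - y))^2 = (norm x)^2 + (norm y)^2 - 2 * Re (cinner x (y::'a::complex_inner))"
proof -
  have "cinner (x-y) (x-y) = cinner x x + cinner y y - cinner x y - cinner y x"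
    by (simp add: cinner_diff_left cinner_diff_right)
  moreover have "Re (cinner y x) = Re (cinner x y)" by (subst cinner_commute) simp
  moreover have "(norm (x-y))^2 = Re (cinner (x-y) (x-y))" "(norm x)^2 = Re (cinner x x)" "(norm y)^2 = Re (cinner y y)"
    by (simp_all add: cinner_self_eq_norm)
  ultimately show ?thesis by simp
qed

lemma Re_cinner_polar: "Re (cinner x (y::'a::complex_inner)) = ((norm (x + y))^2 - (norm (x - y))^2) / 4"
  by (simp add: norm_add_sq norm_diff_sq)

lemma Im_cinner_polar: "Im (cinner x (y::'a::complex_inner)) = - Re (cinner x (\<i> *\<^sub>C y))"
  by (simp add: cinner_scaleC_right)

lemma continuous_cinner_left: "continuous_on UNIV (\<lambda>x. cinner x (h::'a::complex_inner))"
proof -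
  have e: "(\<lambda>x. cinner x h) = (\<lambda>x. complex_of_real (((norm (x + h))^2 - (norm (x - h))^2) / 4)
      + \<i> * complex_of_real (- (((norm (x + \<i> *\<^sub>C h))^2 - (norm (x - \<i> *\<^sub>C h))^2) / 4)))"
    by (rule ext, subst Re_cinner_polar[symmetric], subst Re_cinner_polar[symmetric],
        subst Im_cinner_polar[symmetric]) (simp add: complex_eq_iff)
  show ?thesis unfolding e by (intro continuous_intros) (simp_all add: divide_inverse)
qed

section \<open>Riesz functionals\<close>

definition rz :: "'h::complex_inner \<Rightarrow> 'h \<Rightarrow> complex" where
  "rz h = (\<lambda>x. cinner x h)"

lemma pairing_rz[simp]: "pairing (rz h) f = cinner h f"
  unfolding pairing_def rz_def by (simp add: cinner_commute[of h f])

lemma rz_antidual: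
  assumes "test_space D \<tau>"
  shows "rz h \<in> antidual D \<tau>"
proof -
  have c: "continuous_map \<tau> euclidean (\<lambda>x::'a. x)" using assms unfolding test_space_def by blast
  have "continuous_map euclidean euclidean (rz h)"
    unfolding rz_def using continuous_cinner_left by simp
  from continuous_map_compose[OF c this] have "continuous_map \<tau> euclidean (rz h)"
    by (simp add: o_def)
  moreover have "\<forall>x\<in>D. \<forall>y\<in>D. rz h (x + y) = rz h x + rz h y"
    by (simp add: rz_def cinner_add_left)
  moreover have "\<forall>c. \<forall>x\<in>D. rz h (c *\<^sub>C x) = cnj c * rz h x"
    by (simp add: rz_def cinner_scaleC_left)
  ultimately show ?thesis
    unfolding antidual_def by blast
qed

lemma cinner_ext: assumes "\<And>z. cinner a z = cinner b (z::'a::complex_inner)" shows "a = b"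
proof -
  have "cinner (a - b) (a - b) = cinner a (a - b) - cinner b (a - b)" by (rule cinner_diff_left)
  also have "\<dots> = 0" using assms[of "a - b"] by simp
  finally have "a - b = 0" using cinner_self_eq_0[of "a - b"] by simp
  then show ?thesis by simp
qed

lemma adj_add: "is_adjoint B Bs \<Longrightarrow> Bs (x + y) = Bs x + Bs y"
  by (rule cinner_ext) (simp add: is_adjoint_def cinner_add_left)

lemma adj_scale: "is_adjoint B Bs \<Longrightarrow> Bs (c *\<^sub>C x) = c *\<^sub>C Bs x"
  by (rule cinner_ext) (simp add: is_adjoint_def cinner_scaleC_left)

definition lin :: "('a::complex_vector \<Rightarrow> 'a) \<Rightarrow> bool" where
  "lin A \<longleftrightarrow> (\<forall>x y. A (x + y) = A x + A y) \<and> (\<forall>c x. A (c *\<^sub>C x) = c *\<^sub>C A x)"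

lemma lin_add: "lin A \<Longrightarrow> A (x + y) = A x + A y"
  unfolding lin_def by blast

lemma lin_scaleC: "lin A \<Longrightarrow> A (c *\<^sub>C x) = c *\<^sub>C A x"
  unfolding lin_def by blast

lemma lin_zero: assumes "lin A" shows "A 0 = 0"
proof -
  have "A (0 + 0) = A 0 + A 0" by (rule lin_add[OF assms])
  then show ?thesis by simp
qed

lemma lin_sum: assumes "lin A" shows "A (\<Sum>i\<in>I. f i) = (\<Sum>i\<in>I. A (f i))"
  by (induct I rule: infinite_finite_induct) (simp_all add: lin_zero[OF assms] lin_add[OF assms])

lemma lin_adj: "is_adjoint B Bs \<Longrightarrow> lin Bs"
  unfolding lin_def using adj_add adj_scale by blast

lemma lin_comp: "lin A \<Longrightarrow> lin C \<Longrightarrow> lin (\<lambda>x. A (C x))"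
  unfolding lin_def by simp

lemma lin_id: "lin (\<lambda>x. x)"
  unfolding lin_def by simp

lemma lin_funpow: assumes "lin A" shows "lin (A ^^ k)"
proof (induct k)
  case 0 then show ?case using lin_id by (simp add: id_def)
next
  case (Suc k)
  have "lin (\<lambda>x. A ((A ^^ k) x))" by (rule lin_comp[OF assms Suc])
  then show ?case by (simp add: o_def)
qed

lemma lin_scale: "lin (\<lambda>x. c *\<^sub>C x)"
  unfolding lin_def by (simp add: scaleC_add_right scaleC_comm)

section \<open>Permanent-like sums\<close>

definition pmt :: "('h \<Rightarrow> complex) list \<Rightarrow> 'h list \<Rightarrow> complex" where
  "pmt gs \<psi>s = (\<Sum>\<sigma>\<in>{\<sigma>. \<sigma> permutes {..<length \<psi>s}}. \<Prod>k<length \<psi>s. pairing (gs ! k) (\<psi>s ! \<sigma> k))"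

lemma sym_elem_eq: "sym_elem D \<tau> \<phi> \<psi>s gs = (if length gs = length \<psi>s \<and> set gs \<subseteq> antidual D \<tau>
   then (complex_of_real (1 / fact (length \<psi>s)) * pmt gs \<psi>s) *\<^sub>C \<phi> else 0)"
  by (simp add: sym_elem_def pmt_def)

definition rho :: "nat \<Rightarrow> nat \<Rightarrow> nat" where
  "rho n k = (if k < n then Suc k else if k = n then 0 else k)"

lemma rho_bij: "bij_betw (rho n) {..<Suc n} {..<Suc n}"
proof -
  have inj: "inj_on (rho n) {..<Suc n}" unfolding inj_on_def rho_def by auto
  have "rho n ` {..<Suc n} \<subseteq> {..<Suc n}" unfolding rho_def by auto
  then have "rho n ` {..<Suc n} = {..<Suc n}" using endo_inj_surj[OF _ _ inj] by simp
  then show ?thesis using inj unfolding bij_betw_def by simp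
qed

lemma rho_permutes: "rho n permutes {..<Suc n}"
  by (rule bij_imp_permutes[OF rho_bij]) (simp add: rho_def)

lemma pmt_Cons:
  assumes len: "length \<psi>s = Suc n" "length gs = n"
  shows "pmt (g # gs) \<psi>s = (\<Sum>b<Suc n. pairing g (\<psi>s ! b) * pmt gs (take n (\<psi>s[b := \<psi>s ! n])))"
proof -
  let ?P = "{\<sigma>. \<sigma> permutes {..<Suc n}}"
  define f where "f k j = pairing ((g # gs) ! k) (\<psi>s ! j)" for k j
  have "pmt (g # gs) \<psi>s = (\<Sum>\<sigma>\<in>?P. \<Prod>k<Suc n. f k (\<sigma> k))"
    unfolding pmt_def f_def len by simp
  also have "\<dots> = (\<Sum>\<sigma>\<in>?P. \<Prod>j<Suc n. f (rho n j) (\<sigma> (rho n j)))"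
    by (rule sum.cong[OF refl], rule prod.reindex_bij_betw[OF rho_bij, symmetric])
  also have "\<dots> = (\<Sum>\<sigma>\<in>?P. \<Prod>j<Suc n. f (rho n j) (\<sigma> j))"
    using sum_permutations_compose_right[OF rho_permutes[of n], of "\<lambda>\<sigma>. \<Prod>j<Suc n. f (rho n j) (\<sigma> j)"]
    by (simp add: o_def)
  also have "\<dots> = (\<Sum>\<sigma>\<in>?P. \<Prod>j<Suc n. pairing ((gs @ [g]) ! j) (\<psi>s ! \<sigma> j))"
  proof (intro sum.cong refl prod.cong)
    fix \<sigma> j assume "j \<in> {..<Suc n}"
    then show "f (rho n j) (\<sigma> j) = pairing ((gs @ [g]) ! j) (\<psi>s ! \<sigma> j)"
      unfolding f_def rho_def using len by (auto simp: nth_append)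
  qed
  also have "\<dots> = (\<Sum>b\<in>insert n {..<n}. \<Sum>q\<in>{p. p permutes {..<n}}.
       \<Prod>j<Suc n. pairing ((gs @ [g]) ! j) (\<psi>s ! (Transposition.transpose n b (q j))))"
    using sum_over_permutations_insert[of "{..<n}" n "\<lambda>\<sigma>. \<Prod>j<Suc n. pairing ((gs @ [g]) ! j) (\<psi>s ! \<sigma> j)"]
    by (simp add: lessThan_Suc)
  also have "\<dots> = (\<Sum>b<Suc n. pairing g (\<psi>s ! b) * pmt gs (take n (\<psi>s[b := \<psi>s ! n])))"
  proof (rule sum.cong)
    show "insert n {..<n} = {..<Suc n}" by auto
  next
    fix b assume b: "b \<in> {..<Suc n}"
    have "(\<Sum>q\<in>{p. p permutes {..<n}}. \<Prod>j<Suc n. pairing ((gs @ [g]) ! j) (\<psi>s ! (Transposition.transpose n b (q j))))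
      = (\<Sum>q\<in>{p. p permutes {..<n}}. pairing g (\<psi>s ! b) * (\<Prod>j<n. pairing (gs ! j) (take n (\<psi>s[b := \<psi>s ! n]) ! q j)))"
    proof (rule sum.cong[OF refl])
      fix q assume "q \<in> {p. p permutes {..<n}}"
      then have q: "q permutes {..<n}" by simp
      have qn: "q n = n" using permutes_not_in[OF q] by simp
      have "(\<Prod>j<Suc n. pairing ((gs @ [g]) ! j) (\<psi>s ! (Transposition.transpose n b (q j))))
         = (\<Prod>j<n. pairing ((gs @ [g]) ! j) (\<psi>s ! (Transposition.transpose n b (q j)))) * pairing g (\<psi>s ! b)"
        using len qn by (simp add: nth_append)
      also have "(\<Prod>j<n. pairing ((gs @ [g]) ! j) (\<psi>s ! (Transposition.transpose n b (q j))))
          = (\<Prod>j<n. pairing (gs ! j) (take n (\<psi>s[b := \<psi>s ! n]) ! q j))"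
      proof (rule prod.cong[OF refl])
        fix j assume j: "j \<in> {..<n}"
        then have qj: "q j < n" using permutes_in_image[OF q] by simp
        show "pairing ((gs @ [g]) ! j) (\<psi>s ! (Transposition.transpose n b (q j))) = pairing (gs ! j) (take n (\<psi>s[b := \<psi>s ! n]) ! q j)"
          using j qj b len by (auto simp: nth_append Transposition.transpose_def nth_list_update)
      qed
      finally show "(\<Prod>j<Suc n. pairing ((gs @ [g]) ! j) (\<psi>s ! (Transposition.transpose n b (q j))))
        = pairing g (\<psi>s ! b) * (\<Prod>j<n. pairing (gs ! j) (take n (\<psi>s[b := \<psi>s ! n]) ! q j))"
        by simp
    qed
    also have "\<dots> = pairing g (\<psi>s ! b) * pmt gs (take n (\<psi>s[b := \<psi>s ! n]))"
      unfolding pmt_def using len b by (simp add: sum_distrib_left min_def)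
    finally show "(\<Sum>q\<in>{p. p permutes {..<n}}. \<Prod>j<Suc n. pairing ((gs @ [g]) ! j) (\<psi>s ! (Transposition.transpose n b (q j))))
      = pairing g (\<psi>s ! b) * pmt gs (take n (\<psi>s[b := \<psi>s ! n]))" .
  qed
  finally show ?thesis .
qed



lemma sum_lessThan_Suc_shift': "(\<Sum>k<Suc n. f k) = f 0 + (\<Sum>k<n. f (Suc k) :: 'a::comm_monoid_add)"
  by (induct n) (simp_all add: add.assoc)

lemma sum_lessThan_add_nat: "(\<Sum>i<m+(k::nat). f i) = (\<Sum>i<m. f i) + (\<Sum>i<k. f (m+i) :: 'a::comm_monoid_add)"
  by (induct k) (simp_all add: add.assoc)

lemma ann_sym_elem:
  assumes g: "g \<in> antidual D \<tau>"
  shows "ann g (sym_elem D \<tau> \<phi> \<psi>s) = (\<lambda>gs. \<Sum>b<length \<psi>s. sym_elem D \<tau>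
      ((complex_of_real (sqrt (real (length \<psi>s)) / real (length \<psi>s)) * pairing g (\<psi>s ! b)) *\<^sub>C \<phi>)
      (take (length \<psi>s - 1) (\<psi>s[b := \<psi>s ! (length \<psi>s - 1)])) gs)"
proof (rule ext)
  fix gs
  show "ann g (sym_elem D \<tau> \<phi> \<psi>s) gs = (\<Sum>b<length \<psi>s. sym_elem D \<tau>
      ((complex_of_real (sqrt (real (length \<psi>s)) / real (length \<psi>s)) * pairing g (\<psi>s ! b)) *\<^sub>C \<phi>)
      (take (length \<psi>s - 1) (\<psi>s[b := \<psi>s ! (length \<psi>s - 1)])) gs)"
  proof (cases "\<psi>s = []")
    case True
    then show ?thesis by (simp add: ann_def sym_elem_eq)
  next
    case False
    then obtain n where len: "length \<psi>s = Suc n" by (cases \<psi>s) auto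
    define \<psi>b where "\<psi>b b = take n (\<psi>s[b := \<psi>s ! n])" for b
    have lenb: "length (\<psi>b b) = n" for b unfolding \<psi>b_def using len by simp
    define c where "c = complex_of_real (sqrt (real (Suc n)) / real (Suc n))"
    have rhs: "(\<Sum>b<length \<psi>s. sym_elem D \<tau>
      ((complex_of_real (sqrt (real (length \<psi>s)) / real (length \<psi>s)) * pairing g (\<psi>s ! b)) *\<^sub>C \<phi>)
      (take (length \<psi>s - 1) (\<psi>s[b := \<psi>s ! (length \<psi>s - 1)])) gs)
      = (\<Sum>b<Suc n. sym_elem D \<tau> ((c * pairing g (\<psi>s ! b)) *\<^sub>C \<phi>) (\<psi>b b) gs)"
      unfolding len c_def \<psi>b_def by simp
    show ?thesis
    proof (cases "length gs = n \<and> set gs \<subseteq> antidual D \<tau>")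
      case True
      then have gsl: "length gs = n" and gsa: "set gs \<subseteq> antidual D \<tau>" by auto
      have "ann g (sym_elem D \<tau> \<phi> \<psi>s) gs
          = complex_of_real (sqrt (real (Suc n))) *\<^sub>C
             ((complex_of_real (1 / fact (Suc n)) * pmt (g # gs) \<psi>s) *\<^sub>C \<phi>)"
        unfolding ann_def sym_elem_eq using gsl gsa g len by simp
      also have "\<dots> = ((complex_of_real (sqrt (real (Suc n))) * complex_of_real (1 / fact (Suc n)))
             * (\<Sum>b<Suc n. pairing g (\<psi>s ! b) * pmt gs (\<psi>b b))) *\<^sub>C \<phi>"
        unfolding pmt_Cons[OF len gsl] scaleC_scaleC \<psi>b_def by (simp only: mult.assoc)
      also have "\<dots> = (\<Sum>b<Suc n. (complex_of_real (sqrt (real (Suc n))) * complex_of_real (1 / fact (Suc n))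
             * (pairing g (\<psi>s ! b) * pmt gs (\<psi>b b)))) *\<^sub>C \<phi>"
        by (simp only: sum_distrib_left)
      also have "\<dots> = (\<Sum>b<Suc n. (complex_of_real (sqrt (real (Suc n))) * complex_of_real (1 / fact (Suc n))
             * (pairing g (\<psi>s ! b) * pmt gs (\<psi>b b))) *\<^sub>C \<phi>)"
        by (rule scaleC_sum_left)
      also have "\<dots> = (\<Sum>b<Suc n. (complex_of_real (1 / fact n) * pmt gs (\<psi>b b)) *\<^sub>C ((c * pairing g (\<psi>s ! b)) *\<^sub>C \<phi>))"
      proof (rule sum.cong[OF refl])
        fix b
        have r: "sqrt (real (Suc n)) * (1 / fact (Suc n)) = (1 / fact n) * (sqrt (real (Suc n)) / real (Suc n))"
          by (simp add: field_simps)
        have "complex_of_real (sqrt (real (Suc n))) * complex_of_real (1 / fact (Suc n))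
           = complex_of_real (1 / fact n) * c"
          unfolding c_def of_real_mult[symmetric] r by simp
        then show "(complex_of_real (sqrt (real (Suc n))) * complex_of_real (1 / fact (Suc n))
             * (pairing g (\<psi>s ! b) * pmt gs (\<psi>b b))) *\<^sub>C \<phi>
           = (complex_of_real (1 / fact n) * pmt gs (\<psi>b b)) *\<^sub>C ((c * pairing g (\<psi>s ! b)) *\<^sub>C \<phi>)"
          unfolding scaleC_scaleC by (simp add: ac_simps)
      qed
      also have "\<dots> = (\<Sum>b<Suc n. sym_elem D \<tau> ((c * pairing g (\<psi>s ! b)) *\<^sub>C \<phi>) (\<psi>b b) gs)"
        unfolding sym_elem_eq using gsl gsa lenb by simp
      finally show ?thesis using rhs by simp
    next
      case False
      then have "ann g (sym_elem D \<tau> \<phi> \<psi>s) gs = 0"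
        unfolding ann_def sym_elem_eq using len by auto
      moreover have "sym_elem D \<tau> ((c * pairing g (\<psi>s ! b)) *\<^sub>C \<phi>) (\<psi>b b) gs = 0" for b
        unfolding sym_elem_eq using False lenb by auto
      ultimately show ?thesis using rhs by simp
    qed
  qed
qed

section \<open>Closure properties of SFfin\<close>

lemma SFfin_iff: "\<Psi> \<in> SFfin D \<tau> \<longleftrightarrow> (\<exists>(m::nat) \<phi> \<psi>s. (\<forall>i<m. set (\<psi>s i) \<subseteq> D)
    \<and> \<Psi> = (\<lambda>gs. \<Sum>i<m. sym_elem D \<tau> (\<phi> i) (\<psi>s i) gs))"
  by (simp add: SFfin_def rep_of_def)

lemma SFfin_zero: "(\<lambda>gs. 0) \<in> SFfin D \<tau>"
  unfolding SFfin_iff by (rule exI[of _ 0]) simp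

lemma SFfin_elem: "set \<psi>s \<subseteq> D \<Longrightarrow> sym_elem D \<tau> \<phi> \<psi>s \<in> SFfin D \<tau>"
  unfolding SFfin_iff by (rule exI[of _ 1], rule exI[of _ "\<lambda>_. \<phi>"], rule exI[of _ "\<lambda>_. \<psi>s"]) simp

lemma SFfin_add:
  assumes "\<Psi> \<in> SFfin D \<tau>" "\<Phi> \<in> SFfin D \<tau>"
  shows "(\<lambda>gs. \<Psi> gs + \<Phi> gs) \<in> SFfin D \<tau>"
proof -
  obtain m :: nat and \<phi> \<psi>s where 1: "\<forall>i<m. set (\<psi>s i) \<subseteq> D" "\<Psi> = (\<lambda>gs. \<Sum>i<m. sym_elem D \<tau> (\<phi> i) (\<psi>s i) gs)"
    using assms(1) unfolding SFfin_iff by blast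
  obtain m' :: nat and \<phi>' \<psi>s' where 2: "\<forall>i<m'. set (\<psi>s' i) \<subseteq> D" "\<Phi> = (\<lambda>gs. \<Sum>i<m'. sym_elem D \<tau> (\<phi>' i) (\<psi>s' i) gs)"
    using assms(2) unfolding SFfin_iff by blast
  define \<phi>'' where "\<phi>'' i = (if i < m then \<phi> i else \<phi>' (i - m))" for i
  define \<psi>s'' where "\<psi>s'' i = (if i < m then \<psi>s i else \<psi>s' (i - m))" for i
  have "\<forall>i<m+m'. set (\<psi>s'' i) \<subseteq> D" using 1 2 unfolding \<psi>s''_def by auto
  moreover have "(\<lambda>gs. \<Psi> gs + \<Phi> gs) = (\<lambda>gs. \<Sum>i<m+m'. sym_elem D \<tau> (\<phi>'' i) (\<psi>s'' i) gs)"
    unfolding sum_lessThan_add_nat 1(2) 2(2) \<phi>''_def \<psi>s''_def by simp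
  ultimately show ?thesis unfolding SFfin_iff by blast
qed

lemma SFfin_sum:
  "(\<And>k. k < (M::nat) \<Longrightarrow> F k \<in> SFfin D \<tau>) \<Longrightarrow> (\<lambda>gs. \<Sum>k<M. F k gs) \<in> SFfin D \<tau>"
proof (induct M)
  case 0 then show ?case using SFfin_zero by simp
next
  case (Suc M)
  have "(\<lambda>gs. \<Sum>k<M. F k gs) \<in> SFfin D \<tau>" using Suc by simp
  from SFfin_add[OF this, of "F M"] show ?case using Suc by simp
qed

lemma sym_elem_lin: "lin A \<Longrightarrow> sym_elem D \<tau> (A \<phi>) \<psi>s gs = A (sym_elem D \<tau> \<phi> \<psi>s gs)"
  unfolding sym_elem_eq by (simp add: lin_scaleC lin_zero)

lemma SFfin_lin:
  assumes A: "lin A" and "\<Psi> \<in> SFfin D \<tau>"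
  shows "(\<lambda>gs. A (\<Psi> gs)) \<in> SFfin D \<tau>"
proof -
  obtain m :: nat and \<phi> \<psi>s where 1: "\<forall>i<m. set (\<psi>s i) \<subseteq> D" "\<Psi> = (\<lambda>gs. \<Sum>i<m. sym_elem D \<tau> (\<phi> i) (\<psi>s i) gs)"
    using assms(2) unfolding SFfin_iff by blast
  have "(\<lambda>gs. A (\<Psi> gs)) = (\<lambda>gs. A (\<Sum>i<m. sym_elem D \<tau> (\<phi> i) (\<psi>s i) gs))"
    using 1(2) by (rule arg_cong)
  also have "\<dots> = (\<lambda>gs. \<Sum>i<m. A (sym_elem D \<tau> (\<phi> i) (\<psi>s i) gs))"
    by (rule ext, rule lin_sum[OF A])
  also have "\<dots> = (\<lambda>gs. \<Sum>i<m. sym_elem D \<tau> (A (\<phi> i)) (\<psi>s i) gs)"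
    by (rule ext, rule sum.cong[OF refl], rule sym_elem_lin[OF A, symmetric])
  finally have e: "(\<lambda>gs. A (\<Psi> gs)) = (\<lambda>gs. \<Sum>i<m. sym_elem D \<tau> (A (\<phi> i)) (\<psi>s i) gs)" .
  show ?thesis unfolding SFfin_iff
    by (rule exI[of _ m], rule exI[of _ "\<lambda>i. A (\<phi> i)"], rule exI[of _ \<psi>s]) (use 1(1) e in simp)
qed

lemma ann_sum: "ann g (\<lambda>gs. \<Sum>i\<in>I. F i gs) = (\<lambda>gs. \<Sum>i\<in>I. ann g (F i) gs)"
  by (simp add: ann_def scaleC_sum_right)

lemma set_take_update_subset:
  assumes "set xs \<subseteq> D" "b < length xs" "j < length xs"
  shows "set (take k (xs[b := xs ! j])) \<subseteq> D"
proof -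
  have "xs ! j \<in> D" using assms by auto
  then show ?thesis
    using assms set_take_subset[of k "xs[b := xs ! j]"] set_update_subset_insert[of xs b "xs ! j"]
    by blast
qed

lemma SFfin_ann:
  assumes g: "g \<in> antidual D \<tau>" and "\<Psi> \<in> SFfin D \<tau>"
  shows "ann g \<Psi> \<in> SFfin D \<tau>"
proof -
  obtain m :: nat and \<phi> \<psi>s where 1: "\<forall>i<m. set (\<psi>s i) \<subseteq> D" "\<Psi> = (\<lambda>gs. \<Sum>i<m. sym_elem D \<tau> (\<phi> i) (\<psi>s i) gs)"
    using assms(2) unfolding SFfin_iff by blast
  have "ann g \<Psi> = (\<lambda>gs. \<Sum>i<m. ann g (sym_elem D \<tau> (\<phi> i) (\<psi>s i)) gs)"
    unfolding 1(2) ann_sum ..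
  also have "\<dots> \<in> SFfin D \<tau>"
  proof (rule SFfin_sum)
    fix i assume i: "i < m"
    show "ann g (sym_elem D \<tau> (\<phi> i) (\<psi>s i)) \<in> SFfin D \<tau>"
      unfolding ann_sym_elem[OF g]
      by (rule SFfin_sum, rule SFfin_elem, rule set_take_update_subset) (use 1(1) i in auto)
  qed
  finally show ?thesis .
qed

definition bnd :: "nat \<Rightarrow> ('h, 's::chilbert_space) ftensor \<Rightarrow> bool" where
  "bnd N \<Psi> \<longleftrightarrow> (\<forall>gs. N < length gs \<longrightarrow> \<Psi> gs = 0)"

lemma SFfin_bnd:
  fixes \<Psi> :: "('h::chilbert_space, 's::chilbert_space) ftensor"
  assumes "\<Psi> \<in> SFfin D \<tau>" shows "\<exists>N. bnd N \<Psi>"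
proof -
  obtain m :: nat and \<phi> \<psi>s where 1: "\<Psi> = (\<lambda>gs. \<Sum>i<m. sym_elem D \<tau> (\<phi> i) (\<psi>s i) gs)"
    using assms unfolding SFfin_iff by blast
  define N where "N = (\<Sum>i<m. length (\<psi>s i))"
  have h: "length (\<psi>s i) \<le> N" if "i < m" for i
    unfolding N_def by (rule member_le_sum) (use that in auto)
  have "bnd N \<Psi>" unfolding bnd_def 1
  proof (intro allI impI sum.neutral ballI)
    fix gs :: "('h \<Rightarrow> complex) list" and i assume "N < length gs" "i \<in> {..<m}"
    then have "length gs \<noteq> length (\<psi>s i)" using h[of i] by auto
    then show "sym_elem D \<tau> (\<phi> i) (\<psi>s i) gs = 0" by (simp add: sym_elem_eq)
  qed
  then show ?thesis by blast
qed

lemma bnd_mono: "bnd N \<Psi> \<Longrightarrow> N \<le> N' \<Longrightarrow> bnd N' \<Psi>"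
  unfolding bnd_def by auto

lemma ann_apply: "ann g F gs = complex_of_real (sqrt (real (length gs + 1))) *\<^sub>C F (g # gs)"
  by (simp add: ann_def)

lemma annpow_eq:
  "(\<And>xs. length gs + k \<le> length xs \<Longrightarrow> \<Psi> xs = \<Phi> xs) \<Longrightarrow> (ann g ^^ k) \<Psi> gs = (ann g ^^ k) \<Phi> gs"
proof (induct k arbitrary: gs)
  case 0 then show ?case by simp
next
  case (Suc k)
  have "(ann g ^^ k) \<Psi> (g # gs) = (ann g ^^ k) \<Phi> (g # gs)"
    by (rule Suc(1)) (use Suc(2) in simp)
  moreover have "(ann g ^^ Suc k) \<Psi> gs = ann g ((ann g ^^ k) \<Psi>) gs" for \<Psi> :: "('a, 'b) ftensor"
    by simp
  ultimately show ?case unfolding ann_apply by simp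
qed

lemma annpow_zero: "(ann g ^^ k) (\<lambda>gs. 0) = (\<lambda>gs. (0::'s::chilbert_space))"
  by (induct k) (simp_all add: ann_def)

lemma annpow_add: "(ann g ^^ k) (\<lambda>gs. \<Psi> gs + \<Phi> gs) = (\<lambda>gs. (ann g ^^ k) \<Psi> gs + (ann g ^^ k) \<Phi> gs)"
  by (induct k) (simp_all add: ann_def scaleC_add_right)

lemma annpow_scale: "(ann g ^^ k) (\<lambda>gs. c *\<^sub>C \<Psi> gs) = (\<lambda>gs. c *\<^sub>C (ann g ^^ k) \<Psi> gs)"
  by (induct k) (simp_all add: ann_def scaleC_comm)

lemma annpow_vanish:
  assumes "bnd N \<Psi>" "N < length gs + k"
  shows "(ann g ^^ k) \<Psi> gs = 0"
proof -
  have "(ann g ^^ k) \<Psi> gs = (ann g ^^ k) (\<lambda>gs. 0) gs"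
    by (rule annpow_eq) (use assms in \<open>auto simp: bnd_def\<close>)
  then show ?thesis by (simp add: annpow_zero)
qed

lemma SFfin_annpow: "g \<in> antidual D \<tau> \<Longrightarrow> \<Psi> \<in> SFfin D \<tau> \<Longrightarrow> (ann g ^^ k) \<Psi> \<in> SFfin D \<tau>"
  by (induct k) (simp_all add: SFfin_ann)

lemma exp_op_fin:
  assumes A: "lin Bs" and "bnd N \<Psi>" and "N < M"
  shows "exp_op Bs g \<Psi> gs = (\<Sum>k<M. complex_of_real (1 / fact k) *\<^sub>C (Bs ^^ k) ((ann g ^^ k) \<Psi> gs))"
  unfolding exp_op_def
proof (rule suminf_finite)
  fix k assume "k \<notin> {..<M}"
  then have "(ann g ^^ k) \<Psi> gs = 0" using annpow_vanish[OF assms(2)] assms(3) by auto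
  then show "complex_of_real (1 / fact k) *\<^sub>C (Bs ^^ k) ((ann g ^^ k) \<Psi> gs) = 0"
    using lin_zero[OF lin_funpow[OF A]] by simp
qed simp

lemma exp_op_SFfin:
  assumes A: "lin Bs" and g: "g \<in> antidual D \<tau>" and P: "\<Psi> \<in> SFfin D \<tau>"
  shows "exp_op Bs g \<Psi> \<in> SFfin D \<tau>"
proof -
  obtain N where N: "bnd N \<Psi>" using SFfin_bnd[OF P] by blast
  have "exp_op Bs g \<Psi> = (\<lambda>gs. \<Sum>k<Suc N. complex_of_real (1 / fact k) *\<^sub>C (Bs ^^ k) ((ann g ^^ k) \<Psi> gs))"
    using exp_op_fin[OF A N, of "Suc N"] by auto
  also have "\<dots> \<in> SFfin D \<tau>"
  proof (rule SFfin_sum)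
    fix k
    have "lin (\<lambda>x. complex_of_real (1 / fact k) *\<^sub>C (Bs ^^ k) x)"
      by (rule lin_comp[OF lin_scale lin_funpow[OF A]])
    from SFfin_lin[OF this SFfin_annpow[OF g P]]
    show "(\<lambda>gs. complex_of_real (1 / fact k) *\<^sub>C (Bs ^^ k) ((ann g ^^ k) \<Psi> gs)) \<in> SFfin D \<tau>" .
  qed
  finally show ?thesis .
qed

lemma bnd_add: "bnd N \<Psi> \<Longrightarrow> bnd N \<Phi> \<Longrightarrow> bnd N (\<lambda>gs. \<Psi> gs + \<Phi> gs)"
  unfolding bnd_def by simp

lemma bnd_scale: "bnd N \<Psi> \<Longrightarrow> bnd N (\<lambda>gs. c *\<^sub>C \<Psi> gs)"
  unfolding bnd_def by simp

lemma exp_op_add: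
  assumes A: "lin Bs" and P: "\<Psi> \<in> SFfin D \<tau>" and Q: "\<Phi> \<in> SFfin D \<tau>"
  shows "exp_op Bs g (\<lambda>gs. \<Psi> gs + \<Phi> gs) = (\<lambda>gs. exp_op Bs g \<Psi> gs + exp_op Bs g \<Phi> gs)"
proof (rule ext)
  fix gs
  obtain N1 where N1: "bnd N1 \<Psi>" using SFfin_bnd[OF P] by blast
  obtain N2 where N2: "bnd N2 \<Phi>" using SFfin_bnd[OF Q] by blast
  define N where "N = max N1 N2"
  have b1: "bnd N \<Psi>" using bnd_mono[OF N1] unfolding N_def by simp
  have b2: "bnd N \<Phi>" using bnd_mono[OF N2] unfolding N_def by simp
  show "exp_op Bs g (\<lambda>gs. \<Psi> gs + \<Phi> gs) gs = exp_op Bs g \<Psi> gs + exp_op Bs g \<Phi> gs"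
    unfolding exp_op_fin[OF A b1 lessI] exp_op_fin[OF A b2 lessI] exp_op_fin[OF A bnd_add[OF b1 b2] lessI]
      annpow_add lin_add[OF lin_funpow[OF A]] scaleC_add_right sum.distrib ..
qed

lemma exp_op_scale:
  assumes A: "lin Bs" and P: "\<Psi> \<in> SFfin D \<tau>"
  shows "exp_op Bs g (\<lambda>gs. c *\<^sub>C \<Psi> gs) = (\<lambda>gs. c *\<^sub>C exp_op Bs g \<Psi> gs)"
proof (rule ext)
  fix gs
  obtain N where b1: "bnd N \<Psi>" using SFfin_bnd[OF P] by blast
  show "exp_op Bs g (\<lambda>gs. c *\<^sub>C \<Psi> gs) gs = c *\<^sub>C exp_op Bs g \<Psi> gs"
    unfolding exp_op_fin[OF A b1 lessI] exp_op_fin[OF A bnd_scale[OF b1] lessI]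
      annpow_scale lin_scaleC[OF lin_funpow[OF A]] scaleC_sum_right
    by (simp add: scaleC_comm)
qed

lemma exp_op_step:
  assumes A: "lin Bs" and b1: "bnd N \<Psi>" and b2: "bnd N \<Phi>"
    and eq: "\<And>xs. length gs < length xs \<Longrightarrow> \<Psi> xs = \<Phi> xs"
    and e: "exp_op Bs g \<Psi> gs = exp_op Bs g \<Phi> gs"
  shows "\<Psi> gs = \<Phi> gs"
proof -
  have t: "(ann g ^^ Suc k) \<Psi> gs = (ann g ^^ Suc k) \<Phi> gs" for k
    by (rule annpow_eq) (rule eq, simp)
  from e show ?thesis
    unfolding exp_op_fin[OF A b1 lessI] exp_op_fin[OF A b2 lessI] sum_lessThan_Suc_shift' t
    by (simp add: scaleC_one)
qed

lemma exp_op_inj_aux: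
  fixes \<Psi> \<Phi> :: "('h::chilbert_space, 's::chilbert_space) ftensor"
  assumes A: "lin Bs" and b1: "bnd N \<Psi>" and b2: "bnd N \<Phi>"
    and e: "exp_op Bs g \<Psi> = exp_op Bs g \<Phi>"
  shows "\<Psi> = \<Phi>"
proof -
  have "\<forall>gs::('h \<Rightarrow> complex) list. N < length gs + j \<longrightarrow> \<Psi> gs = \<Phi> gs" for j
  proof (induct j)
    case 0 then show ?case using b1 b2 unfolding bnd_def by simp
  next
    case (Suc j)
    show ?case
    proof (intro allI impI)
      fix gs :: "('h \<Rightarrow> complex) list" assume gs: "N < length gs + Suc j"
      show "\<Psi> gs = \<Phi> gs"
      proof (cases "N < length gs + j")
        case True then show ?thesis using Suc by blast
      next
        case False
        show ?thesis
          by (rule exp_op_step[OF A b1 b2, where g=g]) (use Suc False gs e in auto)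
      qed
    qed
  qed
  note h = this
  show ?thesis
  proof (rule ext)
    fix gs :: "('h \<Rightarrow> complex) list"
    have "N < length gs + Suc N \<longrightarrow> \<Psi> gs = \<Phi> gs" using h[of "Suc N"] by blast
    then show "\<Psi> gs = \<Phi> gs" by simp
  qed
qed



lemma cnj_cinner: "cnj (cinner x y) = cinner y (x::'a::complex_inner)"
  by (simp add: cinner_commute[of y x])

lemma perm_prod_swap:
  "(\<Sum>\<sigma>\<in>{\<sigma>. \<sigma> permutes {..<n}}. \<Prod>k<n. f (\<sigma> k) k)
   = (\<Sum>\<sigma>\<in>{\<sigma>. \<sigma> permutes {..<n}}. \<Prod>k<n. (f k (\<sigma> k) :: 'a::comm_ring_1))"
proof -
  have "(\<Sum>\<sigma>\<in>{\<sigma>. \<sigma> permutes {..<n}}. \<Prod>k<n. f (\<sigma> k) k)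
      = (\<Sum>\<sigma>\<in>{\<sigma>. \<sigma> permutes {..<n}}. \<Prod>k<n. f k (inv \<sigma> k))"
    by (rule sum.cong[OF refl], rule prod.permutes_inv) simp
  also have "\<dots> = (\<Sum>\<sigma>\<in>{\<sigma>. \<sigma> permutes {..<n}}. \<Prod>k<n. f k (\<sigma> k))"
    by (rule sum_permutations_inverse[symmetric])
  finally show ?thesis .
qed

lemma elem_inner_sym: "elem_inner \<phi> \<psi>s \<phi>' \<psi>s' = cnj (elem_inner \<phi>' \<psi>s' \<phi> \<psi>s)"
proof (cases "length \<psi>s = length \<psi>s'")
  case True
  define n where "n = length \<psi>s"
  have n': "length \<psi>s' = n" using True n_def by simp
  have "cnj (elem_inner \<phi>' \<psi>s' \<phi> \<psi>s) = cinner \<phi> \<phi>' * complex_of_real (1 / fact n) *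
      (\<Sum>\<sigma>\<in>{\<sigma>. \<sigma> permutes {..<n}}. \<Prod>k<n. cinner (\<psi>s ! (\<sigma> k)) (\<psi>s' ! k))"
    unfolding elem_inner_def n' using True n_def by (simp add: cnj_sum cnj_prod cnj_cinner)
  also have "\<dots> = elem_inner \<phi> \<psi>s \<phi>' \<psi>s'"
    unfolding elem_inner_def using True n_def
    by (simp add: perm_prod_swap[of "\<lambda>a b. cinner (\<psi>s ! a) (\<psi>s' ! b)"])
  finally show ?thesis by simp
next
  case False
  then show ?thesis unfolding elem_inner_def by simp
qed

lemma pmt_rz: "length \<psi>s = length \<psi>s' \<Longrightarrow>
  pmt (map rz \<psi>s) \<psi>s' = (\<Sum>\<sigma>\<in>{\<sigma>. \<sigma> permutes {..<length \<psi>s'}}. \<Prod>k<length \<psi>s'. cinner (\<psi>s ! k) (\<psi>s' ! \<sigma> k))"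
  unfolding pmt_def by (intro sum.cong refl prod.cong) auto

lemma set_map_rz: "test_space D \<tau> \<Longrightarrow> set (map rz hs) \<subseteq> antidual D \<tau>"
  using rz_antidual by auto

lemma cinner_sym_elem_rz:
  assumes "test_space D \<tau>"
  shows "cinner \<phi> (sym_elem D \<tau> \<phi>' \<psi>s' (map rz \<psi>s)) = elem_inner \<phi> \<psi>s \<phi>' \<psi>s'"
proof (cases "length \<psi>s = length \<psi>s'")
  case True
  then show ?thesis
    unfolding sym_elem_eq elem_inner_def using set_map_rz[OF assms, of \<psi>s] pmt_rz[OF True]
    by (simp add: cinner_scaleC_right ac_simps)
next
  case False
  then show ?thesis unfolding sym_elem_eq elem_inner_def by simp
qed

definition SS where
  "SS m \<phi> \<psi>s m' \<phi>' \<psi>s' = (\<Sum>i<(m::nat). \<Sum>j<(m'::nat). elem_inner (\<phi> i) (\<psi>s i) (\<phi>' j) (\<psi>s' j))"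

lemma SS_eval:
  assumes "test_space D \<tau>" "\<Phi> = (\<lambda>gs. \<Sum>j<m'. sym_elem D \<tau> (\<phi>' j) (\<psi>s' j) gs)"
  shows "SS m \<phi> \<psi>s m' \<phi>' \<psi>s' = (\<Sum>i<m. cinner (\<phi> i) (\<Phi> (map rz (\<psi>s i))))"
  unfolding SS_def assms(2) cinner_sum_right cinner_sym_elem_rz[OF assms(1)] ..

lemma SS_swap: "SS m \<phi> \<psi>s m' \<phi>' \<psi>s' = cnj (SS m' \<phi>' \<psi>s' m \<phi> \<psi>s)"
  unfolding SS_def cnj_sum
  by (subst sum.swap) (simp add: elem_inner_sym[of "\<phi> _" "\<psi>s _"])

lemma tinner_eq:
  assumes T: "test_space D \<tau>" and r: "rep_of D \<tau> \<Psi> m \<phi> \<psi>s" and r': "rep_of D \<tau> \<Phi> m' \<phi>' \<psi>s'"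
  shows "tinner D \<tau> \<Psi> \<Phi> = SS m \<phi> \<psi>s m' \<phi>' \<psi>s'"
proof -
  have eP: "\<Psi> = (\<lambda>gs. \<Sum>j<m. sym_elem D \<tau> (\<phi> j) (\<psi>s j) gs)" using r unfolding rep_of_def by blast
  have eQ: "\<Phi> = (\<lambda>gs. \<Sum>j<m'. sym_elem D \<tau> (\<phi>' j) (\<psi>s' j) gs)" using r' unfolding rep_of_def by blast
  have key: "SS m1 \<phi>1 \<psi>s1 m2 \<phi>2 \<psi>s2 = SS m \<phi> \<psi>s m' \<phi>' \<psi>s'"
    if r1: "rep_of D \<tau> \<Psi> m1 \<phi>1 \<psi>s1" and r2: "rep_of D \<tau> \<Phi> m2 \<phi>2 \<psi>s2" for m1 \<phi>1 \<psi>s1 m2 \<phi>2 \<psi>s2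
  proof -
    have e1: "\<Psi> = (\<lambda>gs. \<Sum>j<m1. sym_elem D \<tau> (\<phi>1 j) (\<psi>s1 j) gs)" using r1 unfolding rep_of_def by blast
    have e2: "\<Phi> = (\<lambda>gs. \<Sum>j<m2. sym_elem D \<tau> (\<phi>2 j) (\<psi>s2 j) gs)" using r2 unfolding rep_of_def by blast
    have h1: "SS m1 \<phi>1 \<psi>s1 m2 \<phi>2 \<psi>s2 = SS m1 \<phi>1 \<psi>s1 m' \<phi>' \<psi>s'"
      unfolding SS_eval[OF T e2] SS_eval[OF T eQ] ..
    have h2: "SS m1 \<phi>1 \<psi>s1 m' \<phi>' \<psi>s' = cnj (SS m' \<phi>' \<psi>s' m1 \<phi>1 \<psi>s1)" by (rule SS_swap)
    have h3: "SS m' \<phi>' \<psi>s' m1 \<phi>1 \<psi>s1 = SS m' \<phi>' \<psi>s' m \<phi> \<psi>s"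
      unfolding SS_eval[OF T e1] SS_eval[OF T eP] ..
    have h4: "cnj (SS m' \<phi>' \<psi>s' m \<phi> \<psi>s) = SS m \<phi> \<psi>s m' \<phi>' \<psi>s'"
      using SS_swap[of m \<phi> \<psi>s m' \<phi>' \<psi>s'] by simp
    have h5: "SS m1 \<phi>1 \<psi>s1 m2 \<phi>2 \<psi>s2 = cnj (SS m' \<phi>' \<psi>s' m1 \<phi>1 \<psi>s1)"
      using h1 h2 by (rule trans)
    have h6: "cnj (SS m' \<phi>' \<psi>s' m1 \<phi>1 \<psi>s1) = cnj (SS m' \<phi>' \<psi>s' m \<phi> \<psi>s)"
      using h3 by (rule arg_cong)
    show ?thesis using trans[OF trans[OF h5 h6] h4] .
  qed
  show ?thesis
    unfolding tinner_def
  proof (rule the_equality)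
    show "\<forall>m1 \<phi>1 \<psi>s1 m2 \<phi>2 \<psi>s2. rep_of D \<tau> \<Psi> m1 \<phi>1 \<psi>s1 \<longrightarrow> rep_of D \<tau> \<Phi> m2 \<phi>2 \<psi>s2 \<longrightarrow>
       SS m \<phi> \<psi>s m' \<phi>' \<psi>s' = (\<Sum>i<m1. \<Sum>j<m2. elem_inner (\<phi>1 i) (\<psi>s1 i) (\<phi>2 j) (\<psi>s2 j))"
    proof (intro allI impI)
      fix m1 \<phi>1 \<psi>s1 m2 \<phi>2 \<psi>s2
      assume r1: "rep_of D \<tau> \<Psi> m1 \<phi>1 \<psi>s1" and r2: "rep_of D \<tau> \<Phi> m2 \<phi>2 \<psi>s2"
      show "SS m \<phi> \<psi>s m' \<phi>' \<psi>s' = (\<Sum>i<m1. \<Sum>j<m2. elem_inner (\<phi>1 i) (\<psi>s1 i) (\<phi>2 j) (\<psi>s2 j))"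
        using key[OF r1 r2] unfolding SS_def by (rule sym)
    qed
  next
    fix z
    assume "\<forall>m1 \<phi>1 \<psi>s1 m2 \<phi>2 \<psi>s2. rep_of D \<tau> \<Psi> m1 \<phi>1 \<psi>s1 \<longrightarrow> rep_of D \<tau> \<Phi> m2 \<phi>2 \<psi>s2 \<longrightarrow>
       z = (\<Sum>i<m1. \<Sum>j<m2. elem_inner (\<phi>1 i) (\<psi>s1 i) (\<phi>2 j) (\<psi>s2 j))"
    then have "z = (\<Sum>i<m. \<Sum>j<m'. elem_inner (\<phi> i) (\<psi>s i) (\<phi>' j) (\<psi>s' j))"
      using r r' by blast
    then show "z = SS m \<phi> \<psi>s m' \<phi>' \<psi>s'" unfolding SS_def .
  qed
qed

lemma SFfin_rep: "\<Psi> \<in> SFfin D \<tau> \<Longrightarrow> \<exists>m \<phi> \<psi>s. rep_of D \<tau> \<Psi> m \<phi> \<psi>s"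
  unfolding SFfin_def by blast

lemma tinner_formula:
  assumes T: "test_space D \<tau>" and r: "rep_of D \<tau> \<Psi> m \<phi> \<psi>s" and P: "\<Phi> \<in> SFfin D \<tau>"
  shows "tinner D \<tau> \<Psi> \<Phi> = (\<Sum>i<m. cinner (\<phi> i) (\<Phi> (map rz (\<psi>s i))))"
proof -
  obtain m' \<phi>' \<psi>s' where r': "rep_of D \<tau> \<Phi> m' \<phi>' \<psi>s'" using SFfin_rep[OF P] by blast
  have eQ: "\<Phi> = (\<lambda>gs. \<Sum>j<m'. sym_elem D \<tau> (\<phi>' j) (\<psi>s' j) gs)" using r' unfolding rep_of_def by blast
  show ?thesis
    unfolding tinner_eq[OF T r r'] by (rule SS_eval[OF T eQ])
qed

lemma tinner_herm:
  assumes T: "test_space D \<tau>" and P: "\<Psi> \<in> SFfin D \<tau>" and Q: "\<Phi> \<in> SFfin D \<tau>"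
  shows "tinner D \<tau> \<Psi> \<Phi> = cnj (tinner D \<tau> \<Phi> \<Psi>)"
proof -
  obtain m \<phi> \<psi>s where r: "rep_of D \<tau> \<Psi> m \<phi> \<psi>s" using SFfin_rep[OF P] by blast
  obtain m' \<phi>' \<psi>s' where r': "rep_of D \<tau> \<Phi> m' \<phi>' \<psi>s'" using SFfin_rep[OF Q] by blast
  show ?thesis unfolding tinner_eq[OF T r r'] tinner_eq[OF T r' r] by (rule SS_swap)
qed

lemma tinner_add_right:
  assumes T: "test_space D \<tau>" and P: "\<Psi> \<in> SFfin D \<tau>" and Q: "\<Phi> \<in> SFfin D \<tau>" and R: "\<Xi> \<in> SFfin D \<tau>"
  shows "tinner D \<tau> \<Psi> (\<lambda>gs. \<Phi> gs + \<Xi> gs) = tinner D \<tau> \<Psi> \<Phi> + tinner D \<tau> \<Psi> \<Xi>"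
proof -
  obtain m \<phi> \<psi>s where r: "rep_of D \<tau> \<Psi> m \<phi> \<psi>s" using SFfin_rep[OF P] by blast
  show ?thesis
    unfolding tinner_formula[OF T r Q] tinner_formula[OF T r R] tinner_formula[OF T r SFfin_add[OF Q R]]
    by (simp add: cinner_add_right sum.distrib)
qed

lemma tinner_scale_right:
  assumes T: "test_space D \<tau>" and P: "\<Psi> \<in> SFfin D \<tau>" and Q: "\<Phi> \<in> SFfin D \<tau>"
  shows "tinner D \<tau> \<Psi> (\<lambda>gs. c *\<^sub>C \<Phi> gs) = c * tinner D \<tau> \<Psi> \<Phi>"
proof -
  obtain m \<phi> \<psi>s where r: "rep_of D \<tau> \<Psi> m \<phi> \<psi>s" using SFfin_rep[OF P] by blast
  show ?thesis
    unfolding tinner_formula[OF T r Q] tinner_formula[OF T r SFfin_lin[OF lin_scale Q]]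
    by (simp add: cinner_scaleC_right sum_distrib_left)
qed



lemma cs_add: "csubspace D \<Longrightarrow> x \<in> D \<Longrightarrow> y \<in> D \<Longrightarrow> x + y \<in> D"
  unfolding csubspace_def by blast

lemma cs_scale: "csubspace D \<Longrightarrow> x \<in> D \<Longrightarrow> c *\<^sub>C x \<in> D"
  unfolding csubspace_def by blast

lemma cs_zero: "csubspace D \<Longrightarrow> 0 \<in> D"
  unfolding csubspace_def by blast

lemma cs_sum: assumes "csubspace D" shows "(\<And>a. a \<in> I \<Longrightarrow> f a \<in> D) \<Longrightarrow> (\<Sum>a\<in>I. f a) \<in> D"
  by (induct I rule: infinite_finite_induct) (auto simp: cs_zero[OF assms] cs_add[OF assms])

lemma cs_diff: assumes "csubspace D" "x \<in> D" "y \<in> D" shows "x - y \<in> D"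
proof -
  have "(-1) *\<^sub>C y \<in> D" by (rule cs_scale[OF assms(1,3)])
  then have "x + (-1) *\<^sub>C y \<in> D" by (rule cs_add[OF assms(1,2)])
  then show ?thesis by (simp add: scaleC_minus_one)
qed

definition orthonormal :: "'a::complex_inner list \<Rightarrow> bool" where
  "orthonormal es \<longleftrightarrow> (\<forall>a<length es. \<forall>b<length es. cinner (es ! a) (es ! b) = (if a = b then 1 else 0))"

definition repro :: "'a::complex_inner list \<Rightarrow> 'a \<Rightarrow> bool" where
  "repro es v \<longleftrightarrow> v = (\<Sum>a<length es. cinner (es ! a) v *\<^sub>C es ! a)"

lemma orth_coeff:
  assumes "orthonormal es" "b < length es"
  shows "cinner (es ! b) (\<Sum>a<length es. c a *\<^sub>C es ! a) = c b"
proof -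
  have "cinner (es ! b) (\<Sum>a<length es. c a *\<^sub>C es ! a) = (\<Sum>a<length es. c a * cinner (es ! b) (es ! a))"
    by (simp add: cinner_sum_right cinner_scaleC_right)
  also have "\<dots> = (\<Sum>a<length es. if a = b then c a else 0)"
    using assms unfolding orthonormal_def by (intro sum.cong refl) auto
  also have "\<dots> = c b" using assms(2) by simp
  finally show ?thesis .
qed

lemma sum_snoc_nth: "(\<Sum>a<length (es @ [e]). f ((es @ [e]) ! a)) = (\<Sum>a<length es. f (es ! a)) + f e"
  by (simp add: nth_append)

definition gsvec :: "'a::complex_inner list \<Rightarrow> 'a \<Rightarrow> 'a" where
  "gsvec es v = complex_of_real (1 / norm (v - (\<Sum>a<length es. cinner (es ! a) v *\<^sub>C es ! a)))
     *\<^sub>C (v - (\<Sum>a<length es. cinner (es ! a) v *\<^sub>C es ! a))"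

lemma gs_step:
  fixes v :: "'a::complex_inner"
  assumes on: "orthonormal es"
  shows "\<exists>es'. set es \<subseteq> set es' \<and> set es' \<subseteq> insert (gsvec es v) (set es)
         \<and> orthonormal es' \<and> repro es' v \<and> (\<forall>w. repro es w \<longrightarrow> repro es' w)"
proof -
  define S where "S = (\<Sum>a<length es. cinner (es ! a) v *\<^sub>C es ! a)"
  define u where "u = v - S"
  define e where "e = complex_of_real (1 / norm u) *\<^sub>C u"
  show ?thesis
  proof (cases "u = 0")
    case True
    then have "repro es v" unfolding repro_def u_def S_def by simp
    then show ?thesis using on by blast
  next
    case False
    then have nu: "norm u \<noteq> 0" by simp
    have uperp: "cinner (es ! a) u = 0" if "a < length es" for a
      unfolding u_def S_def cinner_diff_right orth_coeff[OF on that] by simp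
    have eperp: "cinner (es ! a) e = 0" if "a < length es" for a
      unfolding e_def cinner_scaleC_right uperp[OF that] by simp
    have eperp': "cinner e (es ! a) = 0" if "a < length es" for a
      using eperp[OF that] cnj_cinner[of "es ! a" e] by simp
    have uu: "cinner u u = complex_of_real ((norm u)^2)" by (rule cinner_self_eq_norm)
    have ee: "cinner e e = 1"
      unfolding e_def cinner_scaleC_right cinner_scaleC_left uu using nu
      by (simp add: power2_eq_square)
    define es' where "es' = es @ [e]"
    have len: "length es' = Suc (length es)" unfolding es'_def by simp
    have on': "orthonormal es'"
      unfolding orthonormal_def
    proof (intro allI impI)
      fix a b assume a: "a < length es'" and b: "b < length es'"
      show "cinner (es' ! a) (es' ! b) = (if a = b then 1 else 0)"
      proof (cases "a < length es")
        case ta: True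
        show ?thesis
        proof (cases "b < length es")
          case True then show ?thesis using on ta unfolding orthonormal_def es'_def by (simp add: nth_append)
        next
          case False then have "b = length es" using b len by simp
          then show ?thesis using ta eperp[OF ta] unfolding es'_def by (simp add: nth_append)
        qed
      next
        case fa: False
        then have an: "a = length es" using a len by simp
        show ?thesis
        proof (cases "b < length es")
          case True then show ?thesis using an eperp'[OF True] unfolding es'_def by (simp add: nth_append)
        next
          case False then have "b = length es" using b len by simp
          then show ?thesis using an ee unfolding es'_def by (simp add: nth_append)
        qed
      qed
    qed
    have sumS: "(\<Sum>a<length es'. f (es' ! a)) = (\<Sum>a<length es. f (es ! a)) + f e" for f :: "'a \<Rightarrow> 'a"
      unfolding es'_def by (rule sum_snoc_nth)
    have ext: "repro es' w" if "repro es w" for w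
    proof -
      have w: "w = (\<Sum>a<length es. cinner (es ! a) w *\<^sub>C es ! a)" using that unfolding repro_def .
      have "cinner e w = cinner e (\<Sum>a<length es. cinner (es ! a) w *\<^sub>C es ! a)"
        using w by (rule arg_cong)
      also have "\<dots> = (\<Sum>a<length es. cinner (es ! a) w * cinner e (es ! a))"
        by (simp add: cinner_sum_right cinner_scaleC_right)
      also have "\<dots> = 0" using eperp' by simp
      finally have "cinner e w = 0" .
      then show ?thesis unfolding repro_def using sumS[of "\<lambda>x. cinner x w *\<^sub>C x"] w by simp
    qed
    have "cinner e v = cinner e (u + S)" unfolding u_def by simp
    also have "\<dots> = cinner e u + (\<Sum>a<length es. cinner (es ! a) v * cinner e (es ! a))"
      unfolding S_def by (simp add: cinner_add_right cinner_sum_right cinner_scaleC_right)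
    also have "\<dots> = cinner e u" using eperp' by simp
    also have "\<dots> = complex_of_real (norm u)"
      unfolding e_def cinner_scaleC_left uu using nu by (simp add: power2_eq_square)
    finally have ev: "cinner e v = complex_of_real (norm u)" .
    have "cinner e v *\<^sub>C e = u"
    proof -
      have "cinner e v *\<^sub>C e = complex_of_real (norm u) *\<^sub>C e" by (simp only: ev)
      also have "\<dots> = (complex_of_real (norm u) * complex_of_real (1 / norm u)) *\<^sub>C u"
        unfolding e_def scaleC_scaleC ..
      also have "\<dots> = u" using nu by (simp flip: of_real_mult add: scaleC_one)
      finally show ?thesis .
    qed
    then have "repro es' v" unfolding repro_def using sumS[of "\<lambda>x. cinner x v *\<^sub>C x"] S_def u_def by simp
    moreover have "set es' \<subseteq> insert e (set es)" unfolding es'_def by auto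
    moreover have "set es \<subseteq> set es'" unfolding es'_def by auto
    moreover have "gsvec es v = e" unfolding gsvec_def e_def u_def S_def ..
    ultimately show ?thesis using on' ext by (intro exI[of _ es']) auto
  qed
qed

lemma gram_schmidt:
  fixes vs :: "'a::complex_inner list"
  assumes cs: "csubspace D" and "set vs \<subseteq> D"
  shows "\<exists>es. set es \<subseteq> D \<and> orthonormal es \<and> (\<forall>v\<in>set vs. repro es v)"
  using assms(2)
proof (induct vs)
  case Nil
  have "orthonormal ([]::'a list)" unfolding orthonormal_def by simp
  then show ?case by (intro exI[of _ "[]::'a list"]) auto
next
  case (Cons v vs)
  then obtain es where es: "set es \<subseteq> D" "orthonormal es" "\<forall>w\<in>set vs. repro es w" by auto
  have vD: "v \<in> D" using Cons by simp
  define u where "u = v - (\<Sum>a<length es. cinner (es ! a) v *\<^sub>C es ! a)"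
  have "u \<in> D" unfolding u_def
    by (rule cs_diff[OF cs vD], rule cs_sum[OF cs], rule cs_scale[OF cs]) (use es(1) in auto)
  then have eD: "complex_of_real (1 / norm u) *\<^sub>C u \<in> D" by (rule cs_scale[OF cs])
  obtain es' where es': "set es' \<subseteq> insert (gsvec es v) (set es)"
     "orthonormal es'" "repro es' v" "\<forall>w. repro es w \<longrightarrow> repro es' w"
    using gs_step[OF es(2), of v] by blast
  have gv: "gsvec es v = complex_of_real (1 / norm u) *\<^sub>C u" unfolding gsvec_def u_def ..
  have "set es' \<subseteq> D" using es'(1) es(1) eD gv by auto
  then show ?case using es' es by (intro exI[of _ es']) auto
qed



lemma repro_cinner:
  assumes "repro es \<psi>"
  shows "cinner h \<psi> = (\<Sum>a<length es. cinner h (es ! a) * cinner (es ! a) \<psi>)"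
proof -
  have "cinner h \<psi> = cinner h (\<Sum>a<length es. cinner (es ! a) \<psi> *\<^sub>C es ! a)"
    using assms unfolding repro_def by (rule arg_cong)
  also have "\<dots> = (\<Sum>a<length es. cinner h (es ! a) * cinner (es ! a) \<psi>)"
    by (simp add: cinner_sum_right cinner_scaleC_right mult.commute)
  finally show ?thesis .
qed

definition gsa :: "'h::chilbert_space list \<Rightarrow> nat \<Rightarrow> (nat \<Rightarrow> nat) \<Rightarrow> ('h \<Rightarrow> complex) list" where
  "gsa es n \<alpha> = map (\<lambda>k. rz (es ! \<alpha> k)) [0..<n]"

lemma length_gsa[simp]: "length (gsa es n \<alpha>) = n"
  by (simp add: gsa_def)

lemma set_gsa: "test_space D \<tau> \<Longrightarrow> set (gsa es n \<alpha>) \<subseteq> antidual D \<tau>"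
  using rz_antidual unfolding gsa_def by auto

lemma pmt_gsa: "length \<psi>s = n \<Longrightarrow>
  pmt (gsa es n \<alpha>) \<psi>s = (\<Sum>\<sigma>\<in>{\<sigma>. \<sigma> permutes {..<n}}. \<Prod>k<n. cinner (es ! \<alpha> k) (\<psi>s ! \<sigma> k))"
  unfolding pmt_def gsa_def by (intro sum.cong refl prod.cong) auto

lemma sym_elem_expand:
  assumes T: "test_space D \<tau>" and rp: "\<forall>\<psi>\<in>set \<psi>s. repro es \<psi>" and len: "length hs = n"
  shows "sym_elem D \<tau> \<phi> \<psi>s (map rz hs) = (\<Sum>\<alpha>\<in>PiE {..<n} (\<lambda>_. {..<length es}).
     (\<Prod>k<n. cinner (hs ! k) (es ! \<alpha> k)) *\<^sub>C sym_elem D \<tau> \<phi> \<psi>s (gsa es n \<alpha>))"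
proof (cases "length \<psi>s = n")
  case True
  let ?A = "PiE {..<n} (\<lambda>_. {..<length es})"
  let ?P = "{\<sigma>. \<sigma> permutes {..<n}}"
  define c where "c = complex_of_real (1 / fact n)"
  define P where "P \<alpha> = (\<Prod>k<n. cinner (hs ! k) (es ! \<alpha> k))" for \<alpha>
  define Q where "Q \<alpha> = (\<Sum>\<sigma>\<in>?P. \<Prod>k<n. cinner (es ! \<alpha> k) (\<psi>s ! \<sigma> k))" for \<alpha>
  have key: "(\<Sum>\<sigma>\<in>?P. \<Prod>k<n. cinner (hs ! k) (\<psi>s ! \<sigma> k)) = (\<Sum>\<alpha>\<in>?A. P \<alpha> * Q \<alpha>)"
  proof -
    have "(\<Sum>\<sigma>\<in>?P. \<Prod>k<n. cinner (hs ! k) (\<psi>s ! \<sigma> k))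
        = (\<Sum>\<sigma>\<in>?P. \<Prod>k<n. \<Sum>a<length es. cinner (hs ! k) (es ! a) * cinner (es ! a) (\<psi>s ! \<sigma> k))"
    proof (intro sum.cong refl prod.cong)
      fix \<sigma> k assume s: "\<sigma> \<in> ?P" and k: "k \<in> {..<n}"
      have "\<sigma> k < n" using permutes_in_image[of \<sigma> "{..<n}" k] s k by simp
      then have "\<psi>s ! \<sigma> k \<in> set \<psi>s" using True by simp
      then show "cinner (hs ! k) (\<psi>s ! \<sigma> k) = (\<Sum>a<length es. cinner (hs ! k) (es ! a) * cinner (es ! a) (\<psi>s ! \<sigma> k))"
        using rp repro_cinner by blast
    qed
    also have "\<dots> = (\<Sum>\<sigma>\<in>?P. \<Sum>\<alpha>\<in>?A. \<Prod>k<n. cinner (hs ! k) (es ! \<alpha> k) * cinner (es ! \<alpha> k) (\<psi>s ! \<sigma> k))"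
      by (intro sum.cong refl prod_sum_PiE) auto
    also have "\<dots> = (\<Sum>\<sigma>\<in>?P. \<Sum>\<alpha>\<in>?A. P \<alpha> * (\<Prod>k<n. cinner (es ! \<alpha> k) (\<psi>s ! \<sigma> k)))"
      unfolding P_def by (simp add: prod.distrib)
    also have "\<dots> = (\<Sum>\<alpha>\<in>?A. \<Sum>\<sigma>\<in>?P. P \<alpha> * (\<Prod>k<n. cinner (es ! \<alpha> k) (\<psi>s ! \<sigma> k)))"
      by (rule sum.swap)
    also have "\<dots> = (\<Sum>\<alpha>\<in>?A. P \<alpha> * Q \<alpha>)"
      unfolding Q_def by (simp add: sum_distrib_left)
    finally show ?thesis .
  qed
  have "sym_elem D \<tau> \<phi> \<psi>s (map rz hs) = (c * (\<Sum>\<sigma>\<in>?P. \<Prod>k<n. cinner (hs ! k) (\<psi>s ! \<sigma> k))) *\<^sub>C \<phi>"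
    unfolding sym_elem_eq c_def using True len set_map_rz[OF T, of hs] pmt_rz[of hs \<psi>s] by simp
  also have "\<dots> = (\<Sum>\<alpha>\<in>?A. P \<alpha> * (c * Q \<alpha>)) *\<^sub>C \<phi>"
    unfolding key by (simp add: sum_distrib_left ac_simps)
  also have "\<dots> = (\<Sum>\<alpha>\<in>?A. P \<alpha> *\<^sub>C ((c * Q \<alpha>) *\<^sub>C \<phi>))"
    unfolding scaleC_sum_left scaleC_scaleC ..
  also have "\<dots> = (\<Sum>\<alpha>\<in>?A. P \<alpha> *\<^sub>C sym_elem D \<tau> \<phi> \<psi>s (gsa es n \<alpha>))"
    unfolding sym_elem_eq c_def Q_def using True set_gsa[OF T] pmt_gsa[OF True] by simp
  finally show ?thesis unfolding P_def .
next
  case False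
  then show ?thesis unfolding sym_elem_eq using len by simp
qed

lemma Psi_expand:
  assumes T: "test_space D \<tau>"
    and e: "\<Psi> = (\<lambda>gs. \<Sum>i<m. sym_elem D \<tau> (\<phi> i) (\<psi>s i) gs)"
    and rp: "\<forall>i<m. \<forall>\<psi>\<in>set (\<psi>s i). repro es \<psi>"
  shows "\<Psi> (map rz hs) = (\<Sum>\<alpha>\<in>PiE {..<length hs} (\<lambda>_. {..<length es}).
     (\<Prod>k<length hs. cinner (hs ! k) (es ! \<alpha> k)) *\<^sub>C \<Psi> (gsa es (length hs) \<alpha>))"
proof -
  have "\<Psi> (map rz hs) = (\<Sum>i<m. \<Sum>\<alpha>\<in>PiE {..<length hs} (\<lambda>_. {..<length es}).
     (\<Prod>k<length hs. cinner (hs ! k) (es ! \<alpha> k)) *\<^sub>C sym_elem D \<tau> (\<phi> i) (\<psi>s i) (gsa es (length hs) \<alpha>))"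
    unfolding e
  proof (rule sum.cong[OF refl])
    fix i assume "i \<in> {..<m}"
    then show "sym_elem D \<tau> (\<phi> i) (\<psi>s i) (map rz hs) = (\<Sum>\<alpha>\<in>PiE {..<length hs} (\<lambda>_. {..<length es}).
     (\<Prod>k<length hs. cinner (hs ! k) (es ! \<alpha> k)) *\<^sub>C sym_elem D \<tau> (\<phi> i) (\<psi>s i) (gsa es (length hs) \<alpha>))"
      by (intro sym_elem_expand[OF T _ refl]) (use rp in auto)
  qed
  also have "\<dots> = (\<Sum>\<alpha>\<in>PiE {..<length hs} (\<lambda>_. {..<length es}). \<Sum>i<m.
     (\<Prod>k<length hs. cinner (hs ! k) (es ! \<alpha> k)) *\<^sub>C sym_elem D \<tau> (\<phi> i) (\<psi>s i) (gsa es (length hs) \<alpha>))"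
    by (rule sum.swap)
  also have "\<dots> = (\<Sum>\<alpha>\<in>PiE {..<length hs} (\<lambda>_. {..<length es}).
     (\<Prod>k<length hs. cinner (hs ! k) (es ! \<alpha> k)) *\<^sub>C \<Psi> (gsa es (length hs) \<alpha>))"
    unfolding e scaleC_sum_right ..
  finally show ?thesis .
qed

lemma perm_reindex_gen:
  assumes s: "\<sigma> permutes {..<n}"
  shows "(\<Sum>\<tau>\<in>{\<tau>. \<tau> permutes {..<n}}. \<Prod>k<n. F (\<sigma> k) (\<tau> k))
       = (\<Sum>\<tau>\<in>{\<tau>. \<tau> permutes {..<n}}. \<Prod>k<n. (F k (\<tau> k) :: complex))"
proof -
  have "(\<Sum>\<tau>\<in>{\<tau>. \<tau> permutes {..<n}}. \<Prod>k<n. F (\<sigma> k) (\<tau> k))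
      = (\<Sum>\<tau>\<in>{\<tau>. \<tau> permutes {..<n}}. \<Prod>k<n. F k (\<tau> (inv \<sigma> k)))"
    by (rule sum.cong[OF refl], rule prod.permutes_inv[OF s, where g="\<lambda>a b. F a (_ b)"])
  also have "\<dots> = (\<Sum>\<tau>\<in>{\<tau>. \<tau> permutes {..<n}}. \<Prod>k<n. F k (\<tau> k))"
    using sum_permutations_compose_right[OF permutes_inv[OF s], of "\<lambda>\<tau>. \<Prod>k<n. F k (\<tau> k)"]
    by (simp add: o_def)
  finally show ?thesis .
qed

lemma sym_elem_gsa_perm:
  assumes T: "test_space D \<tau>" and s: "\<sigma> permutes {..<n}"
  shows "sym_elem D \<tau> \<phi> \<psi>s (gsa es n (\<alpha> \<circ> \<sigma>)) = sym_elem D \<tau> \<phi> \<psi>s (gsa es n \<alpha>)"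
proof (cases "length \<psi>s = n")
  case True
  have "pmt (gsa es n (\<alpha> \<circ> \<sigma>)) \<psi>s = pmt (gsa es n \<alpha>) \<psi>s"
    unfolding pmt_gsa[OF True] o_def
    by (rule perm_reindex_gen[OF s, where F="\<lambda>a b. cinner (es ! \<alpha> a) (\<psi>s ! b)"])
  note eq = this
  show ?thesis by (simp add: sym_elem_eq True eq set_gsa[OF T])
next
  case False
  then show ?thesis unfolding sym_elem_eq by simp
qed

lemma PiE_perm_reindex:
  assumes s: "\<sigma> permutes {..<n}"
  shows "(\<Sum>\<alpha>\<in>PiE {..<n} (\<lambda>_. B). G \<alpha>) = (\<Sum>\<beta>\<in>PiE {..<n} (\<lambda>_. B). (G (\<beta> \<circ> \<sigma>) :: complex))"
proof -
  let ?A = "PiE {..<n} (\<lambda>_. B)"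
  have mem: "\<beta> \<circ> p \<in> ?A" if "\<beta> \<in> ?A" "p permutes {..<n}" for \<beta> p
  proof -
    have "\<beta> (p k) \<in> B" if "k < n" for k
      using \<open>\<beta> \<in> ?A\<close> permutes_in_image[OF \<open>p permutes {..<n}\<close>, of k] that by auto
    moreover have "\<beta> (p k) = undefined" if "\<not> k < n" for k
      using \<open>\<beta> \<in> ?A\<close> permutes_not_in[OF \<open>p permutes {..<n}\<close>, of k] that by auto
    ultimately show ?thesis by (auto simp: PiE_iff extensional_def)
  qed
  have bij: "bij_betw (\<lambda>\<beta>. \<beta> \<circ> \<sigma>) ?A ?A"
  proof (rule bij_betw_byWitness[where f'="\<lambda>\<alpha>. \<alpha> \<circ> inv \<sigma>"])
    show "\<forall>a\<in>?A. a \<circ> \<sigma> \<circ> inv \<sigma> = a" using permutes_inv_o(1)[OF s] by (simp add: o_assoc[symmetric])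
    show "\<forall>a\<in>?A. a \<circ> inv \<sigma> \<circ> \<sigma> = a" using permutes_inv_o(2)[OF s] by (simp add: o_assoc[symmetric])
    show "(\<lambda>\<beta>. \<beta> \<circ> \<sigma>) ` ?A \<subseteq> ?A" using mem[OF _ s] by auto
    show "(\<lambda>\<alpha>. \<alpha> \<circ> inv \<sigma>) ` ?A \<subseteq> ?A" using mem[OF _ permutes_inv[OF s]] by auto
  qed
  show ?thesis using sum.reindex_bij_betw[OF bij, of G] by simp
qed



lemma Xcinner:
  assumes T: "test_space D \<tau>" and e: "\<Psi> = (\<lambda>gs. \<Sum>i<m. sym_elem D \<tau> (\<phi> i) (\<psi>s i) gs)"
  shows "cinner (\<Psi> (gsa es n \<alpha>)) Y = (\<Sum>i<m. if length (\<psi>s i) = n then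
     complex_of_real (1 / fact n) * (\<Sum>\<sigma>\<in>{\<sigma>. \<sigma> permutes {..<n}}. \<Prod>k<n. cinner (\<psi>s i ! \<sigma> k) (es ! \<alpha> k))
       * cinner (\<phi> i) Y else 0)"
  unfolding e cinner_sum_left
proof (rule sum.cong[OF refl])
  fix i
  show "cinner (sym_elem D \<tau> (\<phi> i) (\<psi>s i) (gsa es n \<alpha>)) Y = (if length (\<psi>s i) = n then
     complex_of_real (1 / fact n) * (\<Sum>\<sigma>\<in>{\<sigma>. \<sigma> permutes {..<n}}. \<Prod>k<n. cinner (\<psi>s i ! \<sigma> k) (es ! \<alpha> k))
       * cinner (\<phi> i) Y else 0)"
  proof (cases "length (\<psi>s i) = n")
    case True
    have c: "cnj (pmt (gsa es n \<alpha>) (\<psi>s i)) = (\<Sum>\<sigma>\<in>{\<sigma>. \<sigma> permutes {..<n}}. \<Prod>k<n. cinner (\<psi>s i ! \<sigma> k) (es ! \<alpha> k))"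
      unfolding pmt_gsa[OF True] cnj_sum cnj_prod cnj_cinner ..
    show ?thesis using True set_gsa[OF T, of es n \<alpha>]
      by (simp add: sym_elem_eq cinner_scaleC_left c)
  next
    case False
    then show ?thesis by (simp add: sym_elem_eq)
  qed
qed

lemma inner_sigma:
  assumes T: "test_space D \<tau>" and e: "\<Psi> = (\<lambda>gs. \<Sum>i<m. sym_elem D \<tau> (\<phi> i) (\<psi>s i) gs)"
    and rp: "\<forall>i<m. \<forall>\<psi>\<in>set (\<psi>s i). repro es \<psi>"
    and len: "length (\<psi>s i) = n" and s: "\<sigma> permutes {..<n}"
  shows "(\<Sum>\<alpha>\<in>PiE {..<n} (\<lambda>_. {..<length es}). (\<Prod>k<n. cinner (\<psi>s i ! \<sigma> k) (es ! \<alpha> k))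
            * cinner (\<phi> j) (\<Psi> (gsa es n \<alpha>)))
        = cinner (\<phi> j) (\<Psi> (map rz (\<psi>s i)))"
proof -
  let ?A = "PiE {..<n} (\<lambda>_. {..<length es})"
  have X: "\<Psi> (gsa es n (\<beta> \<circ> \<sigma>)) = \<Psi> (gsa es n \<beta>)" for \<beta>
    unfolding e by (intro sum.cong refl sym_elem_gsa_perm[OF T s])
  have "(\<Sum>\<alpha>\<in>?A. (\<Prod>k<n. cinner (\<psi>s i ! \<sigma> k) (es ! \<alpha> k)) * cinner (\<phi> j) (\<Psi> (gsa es n \<alpha>)))
      = (\<Sum>\<beta>\<in>?A. (\<Prod>k<n. cinner (\<psi>s i ! \<sigma> k) (es ! \<beta> (\<sigma> k))) * cinner (\<phi> j) (\<Psi> (gsa es n (\<beta> \<circ> \<sigma>))))"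
    using PiE_perm_reindex[OF s, where B="{..<length es}" and
        G="\<lambda>\<alpha>. (\<Prod>k<n. cinner (\<psi>s i ! \<sigma> k) (es ! \<alpha> k)) * cinner (\<phi> j) (\<Psi> (gsa es n \<alpha>))"]
    by (simp add: o_def)
  also have "\<dots> = (\<Sum>\<beta>\<in>?A. (\<Prod>k<n. cinner (\<psi>s i ! k) (es ! \<beta> k)) * cinner (\<phi> j) (\<Psi> (gsa es n \<beta>)))"
  proof (rule sum.cong[OF refl])
    fix \<beta>
    have "(\<Prod>k<n. cinner (\<psi>s i ! \<sigma> k) (es ! \<beta> (\<sigma> k))) = (\<Prod>k<n. cinner (\<psi>s i ! k) (es ! \<beta> k))"
      by (rule prod.reindex_bij_betw[OF permutes_imp_bij[OF s], of "\<lambda>k. cinner (\<psi>s i ! k) (es ! \<beta> k)"])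
    then show "(\<Prod>k<n. cinner (\<psi>s i ! \<sigma> k) (es ! \<beta> (\<sigma> k))) * cinner (\<phi> j) (\<Psi> (gsa es n (\<beta> \<circ> \<sigma>)))
      = (\<Prod>k<n. cinner (\<psi>s i ! k) (es ! \<beta> k)) * cinner (\<phi> j) (\<Psi> (gsa es n \<beta>))"
      using X by simp
  qed
  also have "\<dots> = cinner (\<phi> j) (\<Sum>\<beta>\<in>?A. (\<Prod>k<n. cinner (\<psi>s i ! k) (es ! \<beta> k)) *\<^sub>C \<Psi> (gsa es n \<beta>))"
    by (simp add: cinner_sum_right cinner_scaleC_right)
  also have "\<dots> = cinner (\<phi> j) (\<Psi> (map rz (\<psi>s i)))"
    using Psi_expand[OF T e rp, of "\<psi>s i"] len by simp
  finally show ?thesis .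
qed

lemma Q_eq:
  assumes T: "test_space D \<tau>" and e: "\<Psi> = (\<lambda>gs. \<Sum>i<m. sym_elem D \<tau> (\<phi> i) (\<psi>s i) gs)"
    and rp: "\<forall>i<m. \<forall>\<psi>\<in>set (\<psi>s i). repro es \<psi>"
  shows "(\<Sum>\<alpha>\<in>PiE {..<n} (\<lambda>_. {..<length es}). cinner (\<Psi> (gsa es n \<alpha>)) (\<Psi> (gsa es n \<alpha>)))
       = (\<Sum>i<m. if length (\<psi>s i) = n then cinner (\<phi> i) (\<Psi> (map rz (\<psi>s i))) else 0)"
proof -
  let ?A = "PiE {..<n} (\<lambda>_. {..<length es})"
  let ?P = "{\<sigma>. \<sigma> permutes {..<n}}"
  define c where "c = complex_of_real (1 / fact n)"
  have "(\<Sum>\<alpha>\<in>?A. cinner (\<Psi> (gsa es n \<alpha>)) (\<Psi> (gsa es n \<alpha>)))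
     = (\<Sum>\<alpha>\<in>?A. \<Sum>i<m. if length (\<psi>s i) = n then
          c * (\<Sum>\<sigma>\<in>?P. \<Prod>k<n. cinner (\<psi>s i ! \<sigma> k) (es ! \<alpha> k)) * cinner (\<phi> i) (\<Psi> (gsa es n \<alpha>)) else 0)"
    unfolding c_def by (rule sum.cong[OF refl], rule Xcinner[OF T e])
  also have "\<dots> = (\<Sum>i<m. \<Sum>\<alpha>\<in>?A. if length (\<psi>s i) = n then
          c * (\<Sum>\<sigma>\<in>?P. \<Prod>k<n. cinner (\<psi>s i ! \<sigma> k) (es ! \<alpha> k)) * cinner (\<phi> i) (\<Psi> (gsa es n \<alpha>)) else 0)"
    by (rule sum.swap)
  also have "\<dots> = (\<Sum>i<m. if length (\<psi>s i) = n then cinner (\<phi> i) (\<Psi> (map rz (\<psi>s i))) else 0)"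
  proof (rule sum.cong[OF refl])
    fix i assume i: "i \<in> {..<m}"
    show "(\<Sum>\<alpha>\<in>?A. if length (\<psi>s i) = n then
          c * (\<Sum>\<sigma>\<in>?P. \<Prod>k<n. cinner (\<psi>s i ! \<sigma> k) (es ! \<alpha> k)) * cinner (\<phi> i) (\<Psi> (gsa es n \<alpha>)) else 0)
        = (if length (\<psi>s i) = n then cinner (\<phi> i) (\<Psi> (map rz (\<psi>s i))) else 0)"
    proof (cases "length (\<psi>s i) = n")
      case True
      have "(\<Sum>\<alpha>\<in>?A. c * (\<Sum>\<sigma>\<in>?P. \<Prod>k<n. cinner (\<psi>s i ! \<sigma> k) (es ! \<alpha> k)) * cinner (\<phi> i) (\<Psi> (gsa es n \<alpha>)))
          = c * (\<Sum>\<sigma>\<in>?P. \<Sum>\<alpha>\<in>?A. (\<Prod>k<n. cinner (\<psi>s i ! \<sigma> k) (es ! \<alpha> k)) * cinner (\<phi> i) (\<Psi> (gsa es n \<alpha>)))"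
        by (simp add: sum_distrib_left sum_distrib_right mult.assoc sum.swap[of _ ?A ?P])
      also have "\<dots> = c * (\<Sum>\<sigma>\<in>?P. cinner (\<phi> i) (\<Psi> (map rz (\<psi>s i))))"
        using inner_sigma[OF T e rp True] by simp
      also have "\<dots> = c * (of_nat (fact n) * cinner (\<phi> i) (\<Psi> (map rz (\<psi>s i))))"
        using card_permutations[of "{..<n}" n] by simp
      also have "\<dots> = cinner (\<phi> i) (\<Psi> (map rz (\<psi>s i)))"
        unfolding c_def by simp
      finally show ?thesis using True by simp
    next
      case False then show ?thesis by simp
    qed
  qed
  finally show ?thesis .
qed

lemma tinner_expand:
  assumes T: "test_space D \<tau>" and r: "rep_of D \<tau> \<Psi> m \<phi> \<psi>s"
    and rp: "\<forall>i<m. \<forall>\<psi>\<in>set (\<psi>s i). repro es \<psi>"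
    and bd: "\<forall>i<m. length (\<psi>s i) \<le> N"
  shows "tinner D \<tau> \<Psi> \<Psi> = (\<Sum>n\<le>N. \<Sum>\<alpha>\<in>PiE {..<n} (\<lambda>_. {..<length es}).
            cinner (\<Psi> (gsa es n \<alpha>)) (\<Psi> (gsa es n \<alpha>)))"
proof -
  have e: "\<Psi> = (\<lambda>gs. \<Sum>i<m. sym_elem D \<tau> (\<phi> i) (\<psi>s i) gs)" using r unfolding rep_of_def by blast
  have P: "\<Psi> \<in> SFfin D \<tau>" using r unfolding SFfin_def by blast
  have "(\<Sum>n\<le>N. \<Sum>\<alpha>\<in>PiE {..<n} (\<lambda>_. {..<length es}). cinner (\<Psi> (gsa es n \<alpha>)) (\<Psi> (gsa es n \<alpha>)))
      = (\<Sum>n\<le>N. \<Sum>i<m. if length (\<psi>s i) = n then cinner (\<phi> i) (\<Psi> (map rz (\<psi>s i))) else 0)"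
    by (rule sum.cong[OF refl], rule Q_eq[OF T e rp])
  also have "\<dots> = (\<Sum>i<m. \<Sum>n\<le>N. if length (\<psi>s i) = n then cinner (\<phi> i) (\<Psi> (map rz (\<psi>s i))) else 0)"
    by (rule sum.swap)
  also have "\<dots> = (\<Sum>i<m. cinner (\<phi> i) (\<Psi> (map rz (\<psi>s i))))"
    using bd by (intro sum.cong refl) (simp add: sum.delta)
  also have "\<dots> = tinner D \<tau> \<Psi> \<Psi>"
    by (rule tinner_formula[OF T r P, symmetric])
  finally show ?thesis by simp
qed



lemma antidual_add: "g \<in> antidual D \<tau> \<Longrightarrow> x \<in> D \<Longrightarrow> y \<in> D \<Longrightarrow> g (x + y) = g x + g y"
  unfolding antidual_def by blast

lemma antidual_scale: "g \<in> antidual D \<tau> \<Longrightarrow> x \<in> D \<Longrightarrow> g (c *\<^sub>C x) = cnj c * g x"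
  unfolding antidual_def by blast

lemma antidual_lin_sum:
  assumes g: "g \<in> antidual D \<tau>" and cs: "csubspace D" and fin: "finite I" and mem: "\<forall>a\<in>I. x a \<in> D"
  shows "g (\<Sum>a\<in>I. c a *\<^sub>C x a) = (\<Sum>a\<in>I. cnj (c a) * g (x a))"
  using fin mem
proof (induct I rule: finite_induct)
  case empty
  have "g (0 + 0) = g 0 + g 0" by (rule antidual_add[OF g cs_zero[OF cs] cs_zero[OF cs]])
  then show ?case by simp
next
  case (insert a F)
  have xa: "c a *\<^sub>C x a \<in> D" using insert by (intro cs_scale[OF cs]) auto
  have sF: "(\<Sum>a\<in>F. c a *\<^sub>C x a) \<in> D" using insert by (intro cs_sum[OF cs] cs_scale[OF cs]) auto
  have "g (\<Sum>a\<in>insert a F. c a *\<^sub>C x a) = g (c a *\<^sub>C x a + (\<Sum>a\<in>F. c a *\<^sub>C x a))"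
    using insert by simp
  also have "\<dots> = g (c a *\<^sub>C x a) + g (\<Sum>a\<in>F. c a *\<^sub>C x a)" by (rule antidual_add[OF g xa sF])
  also have "\<dots> = cnj (c a) * g (x a) + (\<Sum>a\<in>F. cnj (c a) * g (x a))"
    using insert antidual_scale[OF g] by simp
  finally show ?case using insert by simp
qed

lemma riesz_pairing:
  assumes g: "g \<in> antidual D \<tau>" and cs: "csubspace D" and es: "set es \<subseteq> D" and rp: "repro es \<psi>"
  shows "pairing g \<psi> = pairing (rz (\<Sum>a<length es. g (es ! a) *\<^sub>C es ! a)) \<psi>"
proof -
  have "g \<psi> = g (\<Sum>a<length es. cinner (es ! a) \<psi> *\<^sub>C es ! a)"
    using rp unfolding repro_def by (rule arg_cong)
  also have "\<dots> = (\<Sum>a<length es. cnj (cinner (es ! a) \<psi>) * g (es ! a))"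
    by (rule antidual_lin_sum[OF g cs]) (use es in auto)
  finally have "pairing g \<psi> = (\<Sum>a<length es. cinner (es ! a) \<psi> * cnj (g (es ! a)))"
    unfolding pairing_def by (simp add: cnj_sum)
  also have "\<dots> = pairing (rz (\<Sum>a<length es. g (es ! a) *\<^sub>C es ! a)) \<psi>"
    by (simp add: cinner_sum_left cinner_scaleC_left mult.commute)
  finally show ?thesis .
qed

lemma tinner_pos:
  fixes \<Psi> :: "('h::chilbert_space, 's::chilbert_space) ftensor"
  assumes T: "test_space D \<tau>" and P: "\<Psi> \<in> SFfin D \<tau>"
  shows "Im (tinner D \<tau> \<Psi> \<Psi>) = 0 \<and> 0 \<le> Re (tinner D \<tau> \<Psi> \<Psi>) \<and> (tinner D \<tau> \<Psi> \<Psi> = 0 \<longrightarrow> \<Psi> = (\<lambda>gs. 0))"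
proof -
  have cs: "csubspace D" using T unfolding test_space_def by blast
  obtain m \<phi> \<psi>s where r: "rep_of D \<tau> \<Psi> m \<phi> \<psi>s" using SFfin_rep[OF P] by blast
  have e: "\<Psi> = (\<lambda>gs. \<Sum>i<m. sym_elem D \<tau> (\<phi> i) (\<psi>s i) gs)" and sub: "\<forall>i<m. set (\<psi>s i) \<subseteq> D"
    using r unfolding rep_of_def by blast+
  define vs where "vs = concat (map \<psi>s [0..<m])"
  have "set vs \<subseteq> D" unfolding vs_def using sub by auto
  then obtain es where es: "set es \<subseteq> D" "orthonormal es" "\<forall>v\<in>set vs. repro es v"
    using gram_schmidt[OF cs] by blast
  have rp: "\<forall>i<m. \<forall>\<psi>\<in>set (\<psi>s i). repro es \<psi>" using es(3) unfolding vs_def by auto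
  define N where "N = (\<Sum>i<m. length (\<psi>s i))"
  have bd: "\<forall>i<m. length (\<psi>s i) \<le> N"
    unfolding N_def by (auto intro: member_le_sum)
  define R where "R = (\<Sum>n\<le>N. \<Sum>\<alpha>\<in>PiE {..<n} (\<lambda>_. {..<length es}). (norm (\<Psi> (gsa es n \<alpha>)))^2)"
  have tR: "tinner D \<tau> \<Psi> \<Psi> = complex_of_real R"
    unfolding tinner_expand[OF T r rp bd] R_def cinner_self_eq_norm by simp
  have R0: "0 \<le> R" unfolding R_def by (intro sum_nonneg) auto
  have def: "\<Psi> = (\<lambda>gs. 0)" if "tinner D \<tau> \<Psi> \<Psi> = 0"
  proof -
    have "R = 0" using that tR by simp
    then have "\<forall>n\<in>{..N}. (\<Sum>\<alpha>\<in>PiE {..<n} (\<lambda>_. {..<length es}). (norm (\<Psi> (gsa es n \<alpha>)))^2) = 0"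
      unfolding R_def by (subst (asm) sum_nonneg_eq_0_iff) (auto intro: sum_nonneg)
    then have X0: "\<Psi> (gsa es n \<alpha>) = 0" if "n \<le> N" "\<alpha> \<in> PiE {..<n} (\<lambda>_. {..<length es})" for n \<alpha>
      using that by (subst (asm) sum_nonneg_eq_0_iff) (auto simp: finite_PiE)
    show ?thesis
    proof (rule ext)
      fix gs :: "('h \<Rightarrow> complex) list"
      show "\<Psi> gs = 0"
      proof (cases "set gs \<subseteq> antidual D \<tau>")
        case False
        then show ?thesis unfolding e by (simp add: sym_elem_eq)
      next
        case ga: True
        show ?thesis
        proof (cases "length gs \<le> N")
          case False
          then show ?thesis unfolding e using bd by (intro sum.neutral) (auto simp: sym_elem_eq)
        next
          case True
          define hs where "hs = map (\<lambda>g. \<Sum>a<length es. g (es ! a) *\<^sub>C es ! a) gs"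
          have lhs: "length hs = length gs" unfolding hs_def by simp
          have "\<Psi> gs = \<Psi> (map rz hs)"
            unfolding e
          proof (rule sum.cong[OF refl])
            fix i assume i: "i \<in> {..<m}"
            show "sym_elem D \<tau> (\<phi> i) (\<psi>s i) gs = sym_elem D \<tau> (\<phi> i) (\<psi>s i) (map rz hs)"
            proof (cases "length gs = length (\<psi>s i)")
              case len: True
              have "pmt gs (\<psi>s i) = pmt (map rz hs) (\<psi>s i)"
                unfolding pmt_def
              proof (intro sum.cong refl prod.cong)
                fix \<sigma> k assume s: "\<sigma> \<in> {\<sigma>. \<sigma> permutes {..<length (\<psi>s i)}}" and k: "k \<in> {..<length (\<psi>s i)}"
                have "\<sigma> k < length (\<psi>s i)" using permutes_in_image[of \<sigma> _ k] s k by auto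
                then have "repro es (\<psi>s i ! \<sigma> k)" using rp i by auto
                moreover have "gs ! k \<in> antidual D \<tau>" using ga k len by auto
                ultimately show "pairing (gs ! k) (\<psi>s i ! \<sigma> k) = pairing (map rz hs ! k) (\<psi>s i ! \<sigma> k)"
                  using riesz_pairing[OF _ cs es(1)] k len unfolding hs_def by simp
              qed
              then show ?thesis unfolding sym_elem_eq using ga set_map_rz[OF T, of hs] lhs by simp
            next
              case False
              then show ?thesis unfolding sym_elem_eq using lhs by simp
            qed
          qed
          also have "\<dots> = 0"
            unfolding Psi_expand[OF T e rp] using X0 True lhs by (intro sum.neutral) simp
          finally show ?thesis .
        qed
      qed
    qed
  qed
  show ?thesis using tR R0 def by simp
qed

lemma exp_op_zero: "lin Bs \<Longrightarrow> exp_op Bs g (\<lambda>gs. 0) = (\<lambda>gs. 0)"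
  unfolding exp_op_def annpow_zero by (simp add: lin_zero[OF lin_funpow])

theorem proposition3p7:
  fixes B Bs :: "'s::chilbert_space \<Rightarrow> 's"
    and D :: "'h::chilbert_space set" and \<tau> :: "'h topology"
    and g :: "'h \<Rightarrow> complex"
  assumes "test_space D \<tau>"
    and "bounded_clinear_op B"
    and "is_adjoint B Bs"
    and "normal_op B Bs"
    and "g \<in> antidual D \<tau>"
  shows "inj_on (exp_op Bs g) (SFfin D \<tau> :: ('h, 's) ftensor set)
         \<and> nondeg_inner_on (SFfin D \<tau>)
           (\<lambda>\<Psi> \<Phi>. tinner D \<tau> (exp_op Bs g \<Psi>) (exp_op Bs g \<Phi>))"
proof -
  note T = assms(1)
  have A: "lin Bs" by (rule lin_adj[OF assms(3)])
  note g = assms(5)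
  have EP: "exp_op Bs g \<Psi> \<in> SFfin D \<tau>" if "\<Psi> \<in> SFfin D \<tau>" for \<Psi> :: "('h, 's) ftensor"
    by (rule exp_op_SFfin[OF A g that])
  have inj: "\<Psi> = \<Phi>" if P: "\<Psi> \<in> SFfin D \<tau>" and Q: "\<Phi> \<in> SFfin D \<tau>"
      and eq: "exp_op Bs g \<Psi> = exp_op Bs g \<Phi>" for \<Psi> \<Phi> :: "('h, 's) ftensor"
  proof -
    obtain N1 where N1: "bnd N1 \<Psi>" using SFfin_bnd[OF P] by blast
    obtain N2 where N2: "bnd N2 \<Phi>" using SFfin_bnd[OF Q] by blast
    have b1: "bnd (max N1 N2) \<Psi>" using bnd_mono[OF N1] by simp
    have b2: "bnd (max N1 N2) \<Phi>" using bnd_mono[OF N2] by simp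
    show ?thesis by (rule exp_op_inj_aux[OF A b1 b2 eq])
  qed
  have "inj_on (exp_op Bs g) (SFfin D \<tau> :: ('h, 's) ftensor set)"
    unfolding inj_on_def using inj by blast
  moreover have "nondeg_inner_on (SFfin D \<tau>) (\<lambda>\<Psi> \<Phi>. tinner D \<tau> (exp_op Bs g \<Psi>) (exp_op Bs g \<Phi>))"
    unfolding nondeg_inner_on_def
  proof (intro conjI ballI allI impI)
    fix \<Psi> \<Phi> :: "('h, 's) ftensor" assume P: "\<Psi> \<in> SFfin D \<tau>" and Q: "\<Phi> \<in> SFfin D \<tau>"
    show "tinner D \<tau> (exp_op Bs g \<Psi>) (exp_op Bs g \<Phi>) = cnj (tinner D \<tau> (exp_op Bs g \<Phi>) (exp_op Bs g \<Psi>))"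
      by (rule tinner_herm[OF T EP[OF P] EP[OF Q]])
  next
    fix \<Psi> \<Phi> \<Xi> :: "('h, 's) ftensor" assume P: "\<Psi> \<in> SFfin D \<tau>" and Q: "\<Phi> \<in> SFfin D \<tau>" and R: "\<Xi> \<in> SFfin D \<tau>"
    show "tinner D \<tau> (exp_op Bs g \<Psi>) (exp_op Bs g (\<lambda>gs. \<Phi> gs + \<Xi> gs))
        = tinner D \<tau> (exp_op Bs g \<Psi>) (exp_op Bs g \<Phi>) + tinner D \<tau> (exp_op Bs g \<Psi>) (exp_op Bs g \<Xi>)"
      unfolding exp_op_add[OF A Q R] by (rule tinner_add_right[OF T EP[OF P] EP[OF Q] EP[OF R]])
  next
    fix \<Psi> \<Phi> :: "('h, 's) ftensor" and c assume P: "\<Psi> \<in> SFfin D \<tau>" and Q: "\<Phi> \<in> SFfin D \<tau>"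
    show "tinner D \<tau> (exp_op Bs g \<Psi>) (exp_op Bs g (\<lambda>gs. c *\<^sub>C \<Phi> gs)) = c * tinner D \<tau> (exp_op Bs g \<Psi>) (exp_op Bs g \<Phi>)"
      unfolding exp_op_scale[OF A Q] by (rule tinner_scale_right[OF T EP[OF P] EP[OF Q]])
  next
    fix \<Psi> :: "('h, 's) ftensor" assume P: "\<Psi> \<in> SFfin D \<tau>"
    show "Im (tinner D \<tau> (exp_op Bs g \<Psi>) (exp_op Bs g \<Psi>)) = 0"
      using tinner_pos[OF T EP[OF P]] by blast
  next
    fix \<Psi> :: "('h, 's) ftensor" assume P: "\<Psi> \<in> SFfin D \<tau>"
    show "0 \<le> Re (tinner D \<tau> (exp_op Bs g \<Psi>) (exp_op Bs g \<Psi>))"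
      using tinner_pos[OF T EP[OF P]] by blast
  next
    fix \<Psi> :: "('h, 's) ftensor" assume P: "\<Psi> \<in> SFfin D \<tau>"
      and z: "tinner D \<tau> (exp_op Bs g \<Psi>) (exp_op Bs g \<Psi>) = 0"
    have "exp_op Bs g \<Psi> = (\<lambda>gs. 0)" using tinner_pos[OF T EP[OF P]] z by blast
    also have "\<dots> = exp_op Bs g (\<lambda>gs. 0)" by (rule exp_op_zero[OF A, symmetric])
    finally show "\<Psi> = (\<lambda>gs. 0)" by (rule inj[OF P SFfin_zero])
  qed
  ultimately show ?thesis by blast
qed


end
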